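(* Consider the Gaussian side-channel assisted three-node full-duplex network described in the context, with capacity region $\mathcal C$, and the regions $\mathcal R_{\rm DC}$ and $\mathcal R_{\rm EC}$ defined in the context. (1) If $W\ge 1$ and $\mathrm{SNR}_{\rm side}\ge \mathrm{SNR}_2$, then $\mathcal R_{\rm DC}$ is within $\tfrac12$ bit/s/Hz of $\mathcal C$: for every $(R_1,R_2)\in\mathcal C$, $\big(R_1-\tfrac12(W_m+W_s),\,R_2-\tfrac12(W_m+W_s)\big)\in\mathcal R_{\rm DC}$. (2) If $W$ is a positive integer and $\mathrm{SNR}_{\rm side}\ge\left(1+\frac{2}{\sqrt2-1}\right)(\mathrm{INR}-2)$, then $\mathcal R_{\rm EC}$ is within $\tfrac12$ bit/s/Hz of $\mathcal C$: for every $(R_1,R_2)\in\mathcal C$, $\big(R_1-\tfrac12(W_m+W_s),\,R_2-\tfrac12(W_m+W_s)\big)\in\mathcal R_{\rm EC}$.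
   Context: Gaussian side-channel assisted three-node full-duplex network: a full-duplex base station (BS) sends a downlink message $S_1$ at rate $R_1$ to a half-duplex mobile M2, while a half-duplex mobile M1 sends an uplink message $S_2$ at rate $R_2$ to BS. The main channel has bandwidth $W_m$; an orthogonal wireless side-channel from M1 to M2 has bandwidth $W_s$, and $W=W_s/W_m$. The real-valued input–output relations are $Y_1=\gamma_1X_1+\gamma^m_{21}X_2+Z_1$ (received by M2), $Y_2=\gamma_2X_2+Z_2$ (received by BS), $Y_3=\gamma^s_{21}X_3+Z_3$ (received by M2 on the side-channel), where $X_1$ is sent by BS, $X_2,X_3$ by M1, and $Z_i$ are mutually independent i.i.d. $\mathcal N(0,\sigma^2)$. Power constraints: $\mathbb E|X_1|^2\le P_1$, $\mathbb E|X_2+X_3|^2\le P_2$. $\mathrm{SNR}_1=|\gamma_1|^2P_1/\sigma^2$, $\mathrm{SNR}_2=|\gamma_2|^2P_2/\sigma^2$, $\mathrm{INR}=|\gamma^m_{21}|^2P_2/\sigma^2$, $\mathrm{SNR}_{\rm side}=|\gamma^s_{21}|^2P_2/\sigma^2$. Rates in bits/s, $C(x)=W_m\log_2(1+x)$, $W\,C(x/W)=W_s\log_2(1+x/W)$. M2 decodes $S_1$ from $(Y_1^n,Y_3^n)$; BS decodes $S_2$ from $Y_2^n$ and $S_1$; BS's symbol at time $i$ may depend on $(S_1,Y_2^{i-1})$. The capacity region $\mathcal C$ is the closure of the set of achievable rate pairs; gaps in bits/s/Hz are normalized by $W_m+W_s$. With $\bar\lambda=1-\lambda$: the decode-and-cancel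 region $\mathcal R_{\rm DC}$ is the union over $\lambda\in[0,1]$ of the sets $\{(R_1,R_2): R_1\le C(\mathrm{SNR}_1),\ R_2\le\min\{W C(\lambda\mathrm{SNR}_{\rm side}/W),\,C(\bar\lambda\mathrm{SNR}_2)\}\}$; the estimate-and-cancel region $\mathcal R_{\rm EC}$ is the union over $K\ge0$ of the sets $\{(R_1,R_2): R_1\le C\big(\mathrm{SNR}_1(1+\tfrac{K^2\mathrm{SNR}_{\rm side}}{(1+K)^2})/(1+\tfrac{K^2\mathrm{SNR}_{\rm side}}{(1+K)^2}+\tfrac{\mathrm{INR}}{(1+K)^2})\big),\ R_2\le C\big(\mathrm{SNR}_2/(1+K)^2\big)\}$. *)

theory Defs
  imports "HOL-Probability.Probability"
begin

text \<open>Time is measured in main-channel samples (2 W_m real samples per second, so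
C(x) = W_m log2(1+x) bits/s).  A block of n main-channel uses lasts n/(2 W_m) seconds,
during which the side channel is used m = floor(n W) times (W = W_s/W_m).
Noise samples have variance sigma^2 on both channels; the power of M1 is the total
energy on both channels divided by the block duration (in main-sample units).\<close>

definition trunc :: "nat \<Rightarrow> (nat \<Rightarrow> real) \<Rightarrow> nat \<Rightarrow> real" where
  "trunc k f = (\<lambda>i. if i < k then f i else 0)"

definition side_len :: "real \<Rightarrow> real \<Rightarrow> nat \<Rightarrow> nat" where
  "side_len Wm Ws n = nat \<lfloor>real n * (Ws / Wm)\<rfloor>"

definition gauss :: "real \<Rightarrow> real measure" where
  "gauss \<sigma> = density lborel (normal_density 0 \<sigma>)"

definition noise :: "real \<Rightarrow> nat \<Rightarrow> nat \<Rightarrow>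
    ((nat \<Rightarrow> real) \<times> (nat \<Rightarrow> real) \<times> (nat \<Rightarrow> real)) measure" where
  "noise \<sigma> n m = (PiM {..<n} (\<lambda>_. gauss \<sigma>)) \<Otimes>\<^sub>M
                    ((PiM {..<n} (\<lambda>_. gauss \<sigma>)) \<Otimes>\<^sub>M (PiM {..<m} (\<lambda>_. gauss \<sigma>)))"

text \<open>Signals.  f2, f3 : M1's encoders (message S2 \<mapsto> main / side codeword);
enc1 : BS encoder, symbol i is a function of S1 and Y2^{i-1}.\<close>
definition sigX2 :: "nat \<Rightarrow> (nat \<Rightarrow> nat \<Rightarrow> real) \<Rightarrow> nat \<Rightarrow> nat \<Rightarrow> real" where
  "sigX2 n f2 s2 = trunc n (f2 s2)"

definition sigX3 :: "nat \<Rightarrow> (nat \<Rightarrow> nat \<Rightarrow> real) \<Rightarrow> nat \<Rightarrow> nat \<Rightarrow> real" where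
  "sigX3 m f3 s2 = trunc m (f3 s2)"

definition sigY2 :: "nat \<Rightarrow> real \<Rightarrow> (nat \<Rightarrow> nat \<Rightarrow> real) \<Rightarrow> nat \<Rightarrow> (nat \<Rightarrow> real) \<Rightarrow> nat \<Rightarrow> real" where
  "sigY2 n g2 f2 s2 z2 = trunc n (\<lambda>i. g2 * sigX2 n f2 s2 i + z2 i)"

definition sigX1 :: "nat \<Rightarrow> real \<Rightarrow> (nat \<Rightarrow> (nat \<Rightarrow> real) \<Rightarrow> nat \<Rightarrow> real) \<Rightarrow>
    (nat \<Rightarrow> nat \<Rightarrow> real) \<Rightarrow> nat \<Rightarrow> nat \<Rightarrow> (nat \<Rightarrow> real) \<Rightarrow> nat \<Rightarrow> real" where
  "sigX1 n g2 enc1 f2 s1 s2 z2 =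
     trunc n (\<lambda>i. enc1 s1 (trunc i (sigY2 n g2 f2 s2 z2)) i)"

definition sigY1 :: "nat \<Rightarrow> real \<Rightarrow> real \<Rightarrow> real \<Rightarrow> (nat \<Rightarrow> (nat \<Rightarrow> real) \<Rightarrow> nat \<Rightarrow> real) \<Rightarrow>
    (nat \<Rightarrow> nat \<Rightarrow> real) \<Rightarrow> nat \<Rightarrow> nat \<Rightarrow> (nat \<Rightarrow> real) \<Rightarrow> (nat \<Rightarrow> real) \<Rightarrow> nat \<Rightarrow> real" where
  "sigY1 n g1 g21m g2 enc1 f2 s1 s2 z1 z2 =
     trunc n (\<lambda>i. g1 * sigX1 n g2 enc1 f2 s1 s2 z2 i + g21m * sigX2 n f2 s2 i + z1 i)"

definition sigY3 :: "nat \<Rightarrow> real \<Rightarrow> (nat \<Rightarrow> nat \<Rightarrow> real) \<Rightarrow> nat \<Rightarrow> (nat \<Rightarrow> real) \<Rightarrow> nat \<Rightarrow> real" where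
  "sigY3 m g21s f3 s2 z3 = trunc m (\<lambda>j. g21s * sigX3 m f3 s2 j + z3 j)"

text \<open>Error event: M2 decodes S1 from (Y1^n, Y3^m); BS decodes S2 from (S1, Y2^n).\<close>
definition err_event where
  "err_event n m g1 g21m g2 g21s enc1 f2 f3 dec2 decBS s1 s2 =
     {\<omega> :: (nat \<Rightarrow> real) \<times> (nat \<Rightarrow> real) \<times> (nat \<Rightarrow> real).
        let z1 = fst \<omega>; z2 = fst (snd \<omega>); z3 = snd (snd \<omega>) in
        dec2 (sigY1 n g1 g21m g2 enc1 f2 s1 s2 z1 z2) (sigY3 m g21s f3 s2 z3) \<noteq> s1
      \<or> decBS s1 (sigY2 n g2 f2 s2 z2) \<noteq> (s2::nat)}"

definition is_code where
  "is_code Wm Ws g1 g21m g2 g21s \<sigma> P1 P2 n M1 M2 \<epsilon> \<longleftrightarrow>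
    (let m = side_len Wm Ws n in
     0 < n \<and> 0 < M1 \<and> 0 < M2 \<and>
     (\<exists>(enc1 :: nat \<Rightarrow> (nat \<Rightarrow> real) \<Rightarrow> nat \<Rightarrow> real)
       (f2 :: nat \<Rightarrow> nat \<Rightarrow> real) (f3 :: nat \<Rightarrow> nat \<Rightarrow> real)
       (dec2 :: (nat \<Rightarrow> real) \<Rightarrow> (nat \<Rightarrow> real) \<Rightarrow> nat)
       (decBS :: nat \<Rightarrow> (nat \<Rightarrow> real) \<Rightarrow> nat).
        (\<forall>s1<M1. \<forall>s2<M2. \<forall>i<n.
           (\<lambda>(z1, z2, z3). sigX1 n g2 enc1 f2 s1 s2 z2 i) \<in> borel_measurable (noise \<sigma> n m)) \<and>
        (\<forall>s1<M1. \<forall>s2<M2.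
           err_event n m g1 g21m g2 g21s enc1 f2 f3 dec2 decBS s1 s2 \<inter> space (noise \<sigma> n m)
             \<in> sets (noise \<sigma> n m)) \<and>
        \<comment> \<open>power constraint of BS: E|X1|^2 \<le> P1 (block average, messages uniform)\<close>
        (\<Sum>s1<M1. \<Sum>s2<M2. \<Sum>i<n.
           (\<integral>\<^sup>+ (z1, z2, z3). ennreal ((sigX1 n g2 enc1 f2 s1 s2 z2 i)\<^sup>2) \<partial>noise \<sigma> n m))
          \<le> ennreal (real M1 * real M2 * real n * P1) \<and>
        \<comment> \<open>power constraint of M1: E|X2+X3|^2 \<le> P2 (total energy on both channels over block duration)\<close>
        (\<Sum>s2<M2. (\<Sum>i<n. (sigX2 n f2 s2 i)\<^sup>2) + (\<Sum>j<m. (sigX3 m f3 s2 j)\<^sup>2))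
          \<le> real M2 * real n * P2 \<and>
        \<comment> \<open>average error probability\<close>
        (\<Sum>s1<M1. \<Sum>s2<M2.
           measure (noise \<sigma> n m) (err_event n m g1 g21m g2 g21s enc1 f2 f3 dec2 decBS s1 s2
                                     \<inter> space (noise \<sigma> n m)))
          \<le> \<epsilon> * real M1 * real M2))"

text \<open>Achievable rate pairs (bits/s): for every eps > 0 and all sufficiently large n
there is a code with at least 2^(n R_k/(2 W_m)) messages (block duration n/(2 W_m) s)
and error probability at most eps.\<close>
definition achievable where
  "achievable Wm Ws g1 g21m g2 g21s \<sigma> P1 P2 R1 R2 \<longleftrightarrow>
     0 \<le> R1 \<and> 0 \<le> R2 \<and>
     (\<forall>\<epsilon>>0. \<exists>N. \<forall>n\<ge>N. \<exists>M1 M2.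
        2 powr (real n * R1 / (2 * Wm)) \<le> real M1 \<and>
        2 powr (real n * R2 / (2 * Wm)) \<le> real M2 \<and>
        is_code Wm Ws g1 g21m g2 g21s \<sigma> P1 P2 n M1 M2 \<epsilon>)"

definition capacity_region :: "real \<Rightarrow> real \<Rightarrow> real \<Rightarrow> real \<Rightarrow> real \<Rightarrow> real \<Rightarrow> real \<Rightarrow> real \<Rightarrow> real \<Rightarrow> (real \<times> real) set" where
  "capacity_region Wm Ws g1 g21m g2 g21s \<sigma> P1 P2 =
     closure {(R1, R2). achievable Wm Ws g1 g21m g2 g21s \<sigma> P1 P2 R1 R2}"

definition Cap :: "real \<Rightarrow> real \<Rightarrow> real" where
  "Cap Wm x = Wm * log 2 (1 + x)"

definition R_DC :: "real \<Rightarrow> real \<Rightarrow> real \<Rightarrow> real \<Rightarrow> real \<Rightarrow> (real \<times> real) set" where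
  "R_DC Wm Ws SNR1 SNR2 SNRs =
     (\<Union>lam\<in>{0..1}. {(R1, R2). R1 \<le> Cap Wm SNR1 \<and>
        R2 \<le> min (Ws * log 2 (1 + lam * SNRs / (Ws / Wm))) (Cap Wm ((1 - lam) * SNR2))})"

definition R_EC :: "real \<Rightarrow> real \<Rightarrow> real \<Rightarrow> real \<Rightarrow> real \<Rightarrow> (real \<times> real) set" where
  "R_EC Wm SNR1 SNR2 INR SNRs =
     (\<Union>K\<in>{0..}. {(R1, R2).
        R1 \<le> Cap Wm (SNR1 * (1 + K\<^sup>2 * SNRs / (1 + K)\<^sup>2)
                      / (1 + K\<^sup>2 * SNRs / (1 + K)\<^sup>2 + INR / (1 + K)\<^sup>2)) \<and>
        R2 \<le> Cap Wm (SNR2 / (1 + K)\<^sup>2)})"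

end

theory Submission
  imports Defs
begin


lemma ln_nd: "0 < \<sigma> \<Longrightarrow> ln (normal_density \<mu> \<sigma> y) = - ln (2*pi)/2 - ln \<sigma> - (y-\<mu>)\<^sup>2/(2*\<sigma>\<^sup>2)"
  unfolding normal_density_def
  by (simp add: ln_div ln_sqrt real_sqrt_mult ln_mult ln_realpow)

lemma key0:
  fixes uu vv s x c y a :: real
  assumes "a \<noteq> 0" "a = (1+s)*uu - s * vv"
  shows "s*(1+s)*(x-c)\<^sup>2*uu * vv/(2*a) - a*(y - ((1+s)*uu*x - s * vv*c)/a)\<^sup>2/2
     = -(1+s)*(y-x)\<^sup>2*uu/2 + s*(y-c)\<^sup>2 * vv/2"
proof -
  define b where "b = (1+s)*uu*x - s * vv*c"
  have a0: "a \<noteq> 0" using assms by simp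
  have e1: "a*(y - b/a)\<^sup>2 = (a*y - b)\<^sup>2 / a"
    using a0 by (simp add: field_simps power2_eq_square)
  have e2: "s*(1+s)*(x-c)\<^sup>2*uu * vv - (a*y - b)\<^sup>2 = a*(-(1+s)*(y-x)\<^sup>2*uu + s*(y-c)\<^sup>2 * vv)"
    unfolding assms(2) b_def by algebra
  have "s*(1+s)*(x-c)\<^sup>2*uu * vv/(2*a) - a*(y - b/a)\<^sup>2/2 = (s*(1+s)*(x-c)\<^sup>2*uu * vv - (a*y - b)\<^sup>2)/(2*a)"
    using a0 e1 by (simp add: field_simps power2_eq_square)
  also have "\<dots> = -(1+s)*(y-x)\<^sup>2*uu/2 + s*(y-c)\<^sup>2 * vv/2"
    using a0 e2 by (simp add: field_simps)
  finally show ?thesis unfolding b_def .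
qed

definition alph :: "real \<Rightarrow> real \<Rightarrow> real \<Rightarrow> real" where
  "alph \<sigma> \<tau> s = (1+s)/\<sigma>\<^sup>2 - s/\<tau>\<^sup>2"

definition gint :: "real \<Rightarrow> real \<Rightarrow> real \<Rightarrow> real \<Rightarrow> real" where
  "gint \<sigma> \<tau> s d = exp (-(1+s)*ln \<sigma> + s*ln \<tau> - ln (alph \<sigma> \<tau> s)/2
      + s*(1+s)*d\<^sup>2/(2*\<sigma>\<^sup>2*\<tau>\<^sup>2*alph \<sigma> \<tau> s))"

lemma alph_pos: "0 < \<sigma> \<Longrightarrow> \<sigma> \<le> \<tau> \<Longrightarrow> 0 \<le> s \<Longrightarrow> 0 < alph \<sigma> \<tau> s"
proof -
  assume a: "0 < \<sigma>" "\<sigma> \<le> \<tau>" "0 \<le> s"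
  have "s/\<tau>\<^sup>2 \<le> s/\<sigma>\<^sup>2" using a by (intro divide_left_mono power_mono mult_pos_pos) auto
  moreover have "0 < 1/\<sigma>\<^sup>2" using a by auto
  ultimately show ?thesis unfolding alph_def add_divide_distrib by linarith
qed

lemma gint_pointwise:
  fixes x c y :: real
  assumes "0 < \<sigma>" "\<sigma> \<le> \<tau>" "0 < s"
  defines "\<alpha> \<equiv> alph \<sigma> \<tau> s"
  defines "m \<equiv> ((1+s)*x/\<sigma>\<^sup>2 - s*c/\<tau>\<^sup>2)/\<alpha>"
  shows "normal_density c \<tau> y * (normal_density x \<sigma> y / normal_density c \<tau> y) powr (1+s)
       = gint \<sigma> \<tau> s (x - c) * normal_density m (1/sqrt \<alpha>) y"
proof -
  have tp: "0 < \<tau>" using assms by auto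
  have ap: "0 < \<alpha>" unfolding \<alpha>_def using assms alph_pos by auto
  have p1: "0 < normal_density c \<tau> y" "0 < normal_density x \<sigma> y" "0 < normal_density m (1/sqrt \<alpha>) y"
    using tp assms ap by (auto intro!: normal_density_pos)
  have "ln (normal_density c \<tau> y * (normal_density x \<sigma> y / normal_density c \<tau> y) powr (1+s))
     = (1+s) * ln (normal_density x \<sigma> y) - s * ln (normal_density c \<tau> y)"
    using p1 by (simp add: ln_mult ln_powr ln_div algebra_simps)
  also have "\<dots> = ln (gint \<sigma> \<tau> s (x - c) * normal_density m (1/sqrt \<alpha>) y)"
  proof -
    have sa: "(1/sqrt \<alpha>)\<^sup>2 = 1/\<alpha>" using ap by (simp add: power_divide)
    have la: "ln (1/sqrt \<alpha>) = - ln \<alpha> / 2" using ap by (simp add: ln_div ln_sqrt)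
    have key: "-(1+s)*(y-x)\<^sup>2/(2*\<sigma>\<^sup>2) + s*(y-c)\<^sup>2/(2*\<tau>\<^sup>2)
        = s*(1+s)*(x-c)\<^sup>2/(2*\<sigma>\<^sup>2*\<tau>\<^sup>2*\<alpha>) - (y-m)\<^sup>2/(2*(1/\<alpha>))"
    proof -
      have e: "\<alpha> = (1+s)*(1/\<sigma>\<^sup>2) - s * (1/\<tau>\<^sup>2)" unfolding \<alpha>_def alph_def by simp
      have e2: "m = ((1+s)*(1/\<sigma>\<^sup>2)*x - s * (1/\<tau>\<^sup>2)*c)/\<alpha>"
        unfolding m_def by simp
      have r1: "s*(1+s)*(x-c)\<^sup>2/(2*\<sigma>\<^sup>2*\<tau>\<^sup>2*\<alpha>) = s*(1+s)*(x-c)\<^sup>2*(1/\<sigma>\<^sup>2) * (1/\<tau>\<^sup>2)/(2*\<alpha>)"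
        by simp
      have r2: "(y-m)\<^sup>2/(2*(1/\<alpha>)) = \<alpha>*(y-m)\<^sup>2/2" by simp
      have r3: "-(1+s)*(y-x)\<^sup>2/(2*\<sigma>\<^sup>2) + s*(y-c)\<^sup>2/(2*\<tau>\<^sup>2) = -(1+s)*(y-x)\<^sup>2*(1/\<sigma>\<^sup>2)/2 + s*(y-c)\<^sup>2 * (1/\<tau>\<^sup>2)/2"
        by simp
      have "\<alpha> \<noteq> 0" using ap by simp
      from key0[OF this e, of x c y] show ?thesis unfolding r2 unfolding r1 r3 e2 by (rule sym)
    qed
    have L1: "(1+s) * ln (normal_density x \<sigma> y) - s * ln (normal_density c \<tau> y)
       = -ln(2*pi)/2 - (1+s)*ln \<sigma> + s*ln \<tau> + (-(1+s)*(y-x)\<^sup>2/(2*\<sigma>\<^sup>2) + s*(y-c)\<^sup>2/(2*\<tau>\<^sup>2))"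
      using assms(1) tp by (simp add: ln_nd algebra_simps add_divide_distrib diff_divide_distrib)
    have L2: "ln (gint \<sigma> \<tau> s (x - c) * normal_density m (1/sqrt \<alpha>) y)
       = -ln(2*pi)/2 - (1+s)*ln \<sigma> + s*ln \<tau> + (s*(1+s)*(x-c)\<^sup>2/(2*\<sigma>\<^sup>2*\<tau>\<^sup>2*\<alpha>) - (y-m)\<^sup>2/(2*(1/\<alpha>)))"
    proof -
      have "ln (gint \<sigma> \<tau> s (x - c) * normal_density m (1/sqrt \<alpha>) y)
         = ln (gint \<sigma> \<tau> s (x - c)) + ln (normal_density m (1/sqrt \<alpha>) y)"
        using p1 by (simp add: ln_mult gint_def)
      also have "ln (normal_density m (1/sqrt \<alpha>) y) = - ln (2*pi)/2 - ln (1/sqrt \<alpha>) - (y-m)\<^sup>2/(2*(1/sqrt \<alpha>)\<^sup>2)"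
        using ap by (intro ln_nd) auto
      also have "ln (gint \<sigma> \<tau> s (x - c)) = -(1+s)*ln \<sigma> + s*ln \<tau> - ln \<alpha>/2
      + s*(1+s)*(x-c)\<^sup>2/(2*\<sigma>\<^sup>2*\<tau>\<^sup>2*\<alpha>)" unfolding gint_def \<alpha>_def by simp
      finally show ?thesis unfolding sa la by (simp add: algebra_simps)
    qed
    show ?thesis unfolding L1 L2 key by simp
  qed
  finally have "ln (normal_density c \<tau> y * (normal_density x \<sigma> y / normal_density c \<tau> y) powr (1+s))
     = ln (gint \<sigma> \<tau> s (x - c) * normal_density m (1/sqrt \<alpha>) y)" .
  moreover have "0 < normal_density c \<tau> y * (normal_density x \<sigma> y / normal_density c \<tau> y) powr (1+s)"
    using p1 by simp
  moreover have "0 < gint \<sigma> \<tau> s (x - c) * normal_density m (1/sqrt \<alpha>) y"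
    using p1 by (simp add: gint_def)
  ultimately show ?thesis by simp
qed

lemma nn_integral_nd: "0 < \<sigma> \<Longrightarrow> (\<integral>\<^sup>+y. ennreal (normal_density m \<sigma> y) \<partial>lborel) = 1"
  by (subst nn_integral_eq_integral) auto

lemma gint_integral:
  fixes x c :: real
  assumes "0 < \<sigma>" "\<sigma> \<le> \<tau>" "0 < s"
  shows "(\<integral>\<^sup>+y. ennreal ((normal_density x \<sigma> y / normal_density c \<tau> y) powr (1+s)) \<partial>density lborel (normal_density c \<tau>))
     = ennreal (gint \<sigma> \<tau> s (x - c))"
proof -
  define \<alpha> where "\<alpha> = alph \<sigma> \<tau> s"
  define m where "m = ((1+s)*x/\<sigma>\<^sup>2 - s*c/\<tau>\<^sup>2)/\<alpha>"
  have "(\<integral>\<^sup>+y. ennreal ((normal_density x \<sigma> y / normal_density c \<tau> y) powr (1+s)) \<partial>density lborel (normal_density c \<tau>))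
     = (\<integral>\<^sup>+y. ennreal (normal_density c \<tau> y) * ennreal ((normal_density x \<sigma> y / normal_density c \<tau> y) powr (1+s)) \<partial>lborel)"
    by (subst nn_integral_density) auto
  also have "\<dots> = (\<integral>\<^sup>+y. ennreal (gint \<sigma> \<tau> s (x - c)) * ennreal (normal_density m (1/sqrt \<alpha>) y) \<partial>lborel)"
    apply (intro nn_integral_cong)
    apply (subst ennreal_mult'[symmetric], simp)
    apply (subst ennreal_mult'[symmetric], simp add: gint_def)
    unfolding \<alpha>_def m_def by (simp add: gint_pointwise[OF assms])
  also have "\<dots> = ennreal (gint \<sigma> \<tau> s (x - c))"
  proof -
    have "0 < alph \<sigma> \<tau> s" using assms alph_pos by auto
    then show ?thesis by (subst nn_integral_cmult) (auto simp: nn_integral_nd \<alpha>_def)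
  qed
  finally show ?thesis .
qed



lemma prob_gauss: "0 < \<sigma> \<Longrightarrow> prob_space (gauss \<sigma>)"
  unfolding gauss_def by (rule prob_space_normal_density)

lemma sets_gauss[simp, measurable_cong]: "sets (gauss \<sigma>) = sets borel"
  unfolding gauss_def by simp

lemma space_gauss[simp]: "space (gauss \<sigma>) = UNIV"
  unfolding gauss_def by simp

lemma ratio_1d:
  fixes x c :: real
  assumes "0 < \<tau>" "A \<in> sets borel"
  shows "(\<integral>\<^sup>+y. ennreal (normal_density x \<sigma> y / normal_density c \<tau> y) * indicator A y \<partial>density lborel (normal_density c \<tau>))
     = emeasure (density lborel (normal_density x \<sigma>)) A"
proof -
  have "(\<integral>\<^sup>+y. ennreal (normal_density x \<sigma> y / normal_density c \<tau> y) * indicator A y \<partial>density lborel (normal_density c \<tau>))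
     = (\<integral>\<^sup>+y. ennreal (normal_density c \<tau> y) * (ennreal (normal_density x \<sigma> y / normal_density c \<tau> y) * indicator A y) \<partial>lborel)"
    using assms by (subst nn_integral_density) auto
  also have "\<dots> = (\<integral>\<^sup>+y. ennreal (normal_density x \<sigma> y) * indicator A y \<partial>lborel)"
  proof (intro nn_integral_cong)
    fix y
    have "0 < normal_density c \<tau> y" using assms by (intro normal_density_pos)
    then show "ennreal (normal_density c \<tau> y) * (ennreal (normal_density x \<sigma> y / normal_density c \<tau> y) * indicator A y)
       = ennreal (normal_density x \<sigma> y) * indicator A y"
      by (simp add: ennreal_mult'[symmetric] mult.assoc[symmetric])
  qed
  also have "\<dots> = emeasure (density lborel (normal_density x \<sigma>)) A"
    using assms by (subst emeasure_density) auto
  finally show ?thesis .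
qed

lemma gauss_shift_1d:
  assumes "0 < \<sigma>" "A \<in> sets borel"
  shows "emeasure (gauss \<sigma>) ((\<lambda>z. z + x) -` A \<inter> space (gauss \<sigma>)) = emeasure (density lborel (normal_density x \<sigma>)) A"
proof -
  have "emeasure (density lborel (normal_density x \<sigma>)) A = (\<integral>\<^sup>+y. ennreal (normal_density x \<sigma> y) * indicator A y \<partial>lborel)"
    using assms by (subst emeasure_density) auto
  also have "\<dots> = (\<integral>\<^sup>+z. ennreal (normal_density x \<sigma> (x + 1 * z)) * indicator A (x + 1 * z) \<partial>lborel)"
    using assms by (subst nn_integral_real_affine[where c=1 and t=x]) auto
  also have "\<dots> = (\<integral>\<^sup>+z. ennreal (normal_density 0 \<sigma> z) * indicator ((\<lambda>z. z + x) -` A \<inter> space (gauss \<sigma>)) z \<partial>lborel)"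
    by (intro nn_integral_cong) (auto simp: normal_density_def gauss_def indicator_def add.commute)
  also have "\<dots> = emeasure (gauss \<sigma>) ((\<lambda>z. z + x) -` A \<inter> space (gauss \<sigma>))"
  proof -
    have "(\<lambda>z. z + x) -` A \<inter> space borel \<in> sets borel"
      using assms(2) by (intro measurable_sets[of _ borel]) auto
    then show ?thesis unfolding gauss_def using assms by (subst emeasure_density) auto
  qed
  finally show ?thesis ..
qed

lemma pim_shift:
  fixes d :: "nat \<Rightarrow> real"
  assumes "0 < \<sigma>"
  shows "distr (PiM {..<n} (\<lambda>_. gauss \<sigma>)) (PiM {..<n} (\<lambda>_. borel)) (\<lambda>z. \<lambda>i\<in>{..<n}. z i + d i)
       = PiM {..<n} (\<lambda>i. density lborel (normal_density (d i) \<sigma>))"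
proof -
  interpret G: product_prob_space "\<lambda>_::nat. gauss \<sigma>"
    using assms by (intro product_prob_spaceI prob_gauss)
  interpret N: product_prob_space "\<lambda>i. density lborel (normal_density (d i) \<sigma>)"
    using assms by (intro product_prob_spaceI prob_space_normal_density)
  have meas: "(\<lambda>z. \<lambda>i\<in>{..<n}. z i + d i) \<in> PiM {..<n} (\<lambda>_. gauss \<sigma>) \<rightarrow>\<^sub>M PiM {..<n} (\<lambda>_. borel)"
    by (intro measurable_restrict) (measurable)
  show ?thesis
  proof (rule N.PiM_eqI)
    show "sets (distr (PiM {..<n} (\<lambda>_. gauss \<sigma>)) (PiM {..<n} (\<lambda>_. borel)) (\<lambda>z. \<lambda>i\<in>{..<n}. z i + d i))
       = sets (PiM {..<n} (\<lambda>i. density lborel (normal_density (d i) \<sigma>)))"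
      by (simp, intro sets_PiM_cong) auto
  next
    fix A assume A: "\<And>i. i \<in> {..<n} \<Longrightarrow> A i \<in> sets (density lborel (normal_density (d i) \<sigma>))"
    then have Ab: "\<And>i. i \<in> {..<n} \<Longrightarrow> A i \<in> sets borel" by simp
    have "emeasure (distr (PiM {..<n} (\<lambda>_. gauss \<sigma>)) (PiM {..<n} (\<lambda>_. borel)) (\<lambda>z. \<lambda>i\<in>{..<n}. z i + d i)) (PiE {..<n} A)
      = emeasure (PiM {..<n} (\<lambda>_. gauss \<sigma>)) ((\<lambda>z. \<lambda>i\<in>{..<n}. z i + d i) -` PiE {..<n} A \<inter> space (PiM {..<n} (\<lambda>_. gauss \<sigma>)))"
      using Ab by (intro emeasure_distr meas sets_PiM_I_finite) auto
    also have "(\<lambda>z. \<lambda>i\<in>{..<n}. z i + d i) -` PiE {..<n} A \<inter> space (PiM {..<n} (\<lambda>_. gauss \<sigma>))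
       = PiE {..<n} (\<lambda>i. (\<lambda>z. z + d i) -` A i \<inter> space (gauss \<sigma>))"
      by (auto simp: space_PiM PiE_def Pi_def extensional_def)
    also have "emeasure (PiM {..<n} (\<lambda>_. gauss \<sigma>)) \<dots> = (\<Prod>i<n. emeasure (gauss \<sigma>) ((\<lambda>z. z + d i) -` A i \<inter> space (gauss \<sigma>)))"
    proof (intro G.emeasure_PiM)
      fix i assume "i \<in> {..<n}"
      then have "A i \<in> sets borel" using Ab by auto
      then have "(\<lambda>z. z + d i) -` A i \<inter> space borel \<in> sets borel"
        by (intro measurable_sets[of _ borel]) auto
      then show "(\<lambda>z. z + d i) -` A i \<inter> space (gauss \<sigma>) \<in> sets (gauss \<sigma>)" by simp
    qed simp
    also have "\<dots> = (\<Prod>i<n. emeasure (density lborel (normal_density (d i) \<sigma>)) (A i))"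
      using Ab assms by (intro prod.cong gauss_shift_1d) auto
    finally show "emeasure (distr (PiM {..<n} (\<lambda>_. gauss \<sigma>)) (PiM {..<n} (\<lambda>_. borel)) (\<lambda>z. \<lambda>i\<in>{..<n}. z i + d i)) (PiE {..<n} A)
      = (\<Prod>i<n. emeasure (density lborel (normal_density (d i) \<sigma>)) (A i))" .
  qed simp
qed

lemma pim_density:
  fixes d c :: "'i \<Rightarrow> real"
  assumes "0 < \<tau>" "finite I" "0 < \<sigma>"
  shows "density (PiM I (\<lambda>i. density lborel (normal_density (c i) \<tau>)))
            (\<lambda>y. \<Prod>i\<in>I. ennreal (normal_density (d i) \<sigma> (y i) / normal_density (c i) \<tau> (y i)))
       = PiM I (\<lambda>i. density lborel (normal_density (d i) \<sigma>))"
proof -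
  interpret Q: product_prob_space "\<lambda>i. density lborel (normal_density (c i) \<tau>)"
    using assms by (intro product_prob_spaceI prob_space_normal_density)
  interpret N: product_prob_space "\<lambda>i. density lborel (normal_density (d i) \<sigma>)"
    using assms by (intro product_prob_spaceI prob_space_normal_density)
  show ?thesis
  proof (rule N.PiM_eqI)
    show "finite I" by fact
    show "sets (density (PiM I (\<lambda>i. density lborel (normal_density (c i) \<tau>)))
            (\<lambda>y. \<Prod>i\<in>I. ennreal (normal_density (d i) \<sigma> (y i) / normal_density (c i) \<tau> (y i))))
       = sets (PiM I (\<lambda>i. density lborel (normal_density (d i) \<sigma>)))"
      by (simp, intro sets_PiM_cong) auto
  next
    fix A assume A: "\<And>i. i \<in> I \<Longrightarrow> A i \<in> sets (density lborel (normal_density (d i) \<sigma>))"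
    then have Ab: "\<And>i. i \<in> I \<Longrightarrow> A i \<in> sets borel" by simp
    have PA: "PiE I A \<in> sets (PiM I (\<lambda>i. density lborel (normal_density (c i) \<tau>)))"
      using Ab assms by (intro sets_PiM_I_finite) auto
    have "emeasure (density (PiM I (\<lambda>i. density lborel (normal_density (c i) \<tau>)))
            (\<lambda>y. \<Prod>i\<in>I. ennreal (normal_density (d i) \<sigma> (y i) / normal_density (c i) \<tau> (y i)))) (PiE I A)
      = (\<integral>\<^sup>+y. (\<Prod>i\<in>I. ennreal (normal_density (d i) \<sigma> (y i) / normal_density (c i) \<tau> (y i))) * indicator (PiE I A) y
           \<partial>PiM I (\<lambda>i. density lborel (normal_density (c i) \<tau>)))"
      using PA by (subst emeasure_density) auto
    also have "\<dots> = (\<integral>\<^sup>+y. (\<Prod>i\<in>I. ennreal (normal_density (d i) \<sigma> (y i) / normal_density (c i) \<tau> (y i)) * indicator (A i) (y i))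
           \<partial>PiM I (\<lambda>i. density lborel (normal_density (c i) \<tau>)))"
    proof (intro nn_integral_cong)
      fix y assume "y \<in> space (PiM I (\<lambda>i. density lborel (normal_density (c i) \<tau>)))"
      then have y: "y \<in> PiE I (\<lambda>_. UNIV)" by (simp add: space_PiM)
      show "(\<Prod>i\<in>I. ennreal (normal_density (d i) \<sigma> (y i) / normal_density (c i) \<tau> (y i))) * indicator (PiE I A) y
         = (\<Prod>i\<in>I. ennreal (normal_density (d i) \<sigma> (y i) / normal_density (c i) \<tau> (y i)) * indicator (A i) (y i))"
      proof (cases "y \<in> PiE I A")
        case True
        then show ?thesis by (auto simp: prod.distrib indicator_def PiE_def Pi_def intro!: prod.cong)
      next
        case False
        with y obtain i where "i \<in> I" "y i \<notin> A i" by (auto simp: PiE_def Pi_def)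
        with assms(2) False show ?thesis
          by (auto simp: indicator_def intro!: prod_zero bexI[of _ i])
      qed
    qed
    also have "\<dots> = (\<Prod>i\<in>I. \<integral>\<^sup>+y. ennreal (normal_density (d i) \<sigma> y / normal_density (c i) \<tau> y) * indicator (A i) y
           \<partial>density lborel (normal_density (c i) \<tau>))"
      using Ab assms by (intro Q.product_nn_integral_prod) auto
    also have "\<dots> = (\<Prod>i\<in>I. emeasure (density lborel (normal_density (d i) \<sigma>)) (A i))"
      using Ab assms by (intro prod.cong ratio_1d) auto
    finally show "emeasure (density (PiM I (\<lambda>i. density lborel (normal_density (c i) \<tau>)))
            (\<lambda>y. \<Prod>i\<in>I. ennreal (normal_density (d i) \<sigma> (y i) / normal_density (c i) \<tau> (y i)))) (PiE I A)
      = (\<Prod>i\<in>I. emeasure (density lborel (normal_density (d i) \<sigma>)) (A i))" .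
  qed
qed



lemma pointwise_cm:
  fixes r g s :: real
  assumes "0 \<le> r" "0 < s"
  shows "r * indicator D y \<le> exp g * indicator D y + exp (-s*g) * r powr (1+s)"
proof (cases "r \<le> exp g")
  case True
  then show ?thesis using assms
    by (auto simp: indicator_def intro!: add_increasing2 mult_nonneg_nonneg)
next
  case False
  then have rp: "exp g < r" by simp
  then have rp: "0 < r" "exp g < r" using exp_gt_zero[of g] by linarith+
  have "exp (s*g) \<le> r powr s"
  proof -
    have "exp (s*g) = (exp g) powr s" by (simp add: powr_def)
    also have "\<dots> \<le> r powr s" using rp assms by (intro powr_mono2) auto
    finally show ?thesis .
  qed
  then have "r \<le> exp (-s*g) * r powr (1+s)"
    using rp by (simp add: powr_add exp_minus field_simps)
  moreover have "r * indicator D y \<le> r" using rp by (simp add: indicator_def)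
  ultimately show ?thesis using assms by (auto simp: indicator_def intro: add_increasing)
qed

lemma awgn_core:
  fixes n :: nat and \<sigma> \<tau> s \<gamma> :: real and A :: "'a set" and x :: "'a \<Rightarrow> nat \<Rightarrow> real"
    and c :: "nat \<Rightarrow> real" and E :: "'a \<Rightarrow> (nat \<Rightarrow> real) set"
  assumes \<sigma>: "0 < \<sigma>" "\<sigma> \<le> \<tau>" and s: "0 < s" and fin: "finite A"
    and E: "\<And>a. a \<in> A \<Longrightarrow> E a \<in> sets (PiM {..<n} (\<lambda>_. gauss \<sigma>))"
    and disj: "\<And>a a' z z'. a \<in> A \<Longrightarrow> a' \<in> A \<Longrightarrow> z \<in> E a \<Longrightarrow> z' \<in> E a' \<Longrightarrow>
               (\<And>i. i < n \<Longrightarrow> x a i + z i = x a' i + z' i) \<Longrightarrow> a = a'"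
  shows "(\<Sum>a\<in>A. emeasure (PiM {..<n} (\<lambda>_. gauss \<sigma>)) (E a))
     \<le> ennreal (exp \<gamma>) + ennreal (exp (-s*\<gamma>)) * (\<Sum>a\<in>A. \<Prod>i<n. ennreal (gint \<sigma> \<tau> s (x a i - c i)))"
proof -
  have \<tau>: "0 < \<tau>" using \<sigma> by auto
  define G where "G = PiM {..<n} (\<lambda>_. gauss \<sigma>)"
  define Q where "Q = PiM {..<n} (\<lambda>i. density lborel (normal_density (c i) \<tau>))"
  define rr where "rr a y = (\<Prod>i<n. normal_density (x a i) \<sigma> (y i) / normal_density (c i) \<tau> (y i))" for a y
  define D where "D a = (\<lambda>y. \<lambda>i\<in>{..<n}. y i - x a i) -` E a \<inter> space Q" for a
  interpret Qp: product_prob_space "\<lambda>i. density lborel (normal_density (c i) \<tau>)"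
    using \<tau> by (intro product_prob_spaceI prob_space_normal_density)
  interpret Qps: prob_space Q unfolding Q_def using \<tau> by (intro prob_space_PiM prob_space_normal_density)
  have sQ: "sets Q = sets (PiM {..<n} (\<lambda>_. borel))" unfolding Q_def by (intro sets_PiM_cong) auto
  have sG: "sets G = sets (PiM {..<n} (\<lambda>_. borel))" unfolding G_def by (intro sets_PiM_cong) auto
  have spQ: "space Q = space (PiM {..<n} (\<lambda>_. borel :: real measure))" using sQ by (rule sets_eq_imp_space_eq)
  have spG: "space G = space (PiM {..<n} (\<lambda>_. borel :: real measure))" using sG by (rule sets_eq_imp_space_eq)
  have Dm: "D a \<in> sets Q" if "a \<in> A" for a
  proof -
    have "(\<lambda>y. \<lambda>i\<in>{..<n}. y i - x a i) \<in> Q \<rightarrow>\<^sub>M G"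
      unfolding measurable_cong_sets[OF sQ sG] by (intro measurable_restrict) measurable
    then show ?thesis unfolding D_def using E[OF that] G_def by (intro measurable_sets) auto
  qed
  have rr_nn: "0 \<le> rr a y" for a y unfolding rr_def by (intro prod_nonneg) auto
  have step12: "emeasure G (E a) = (\<integral>\<^sup>+y. ennreal (rr a y) * indicator (D a) y \<partial>Q)" if a: "a \<in> A" for a
  proof -
    have "emeasure G (E a) = emeasure G ((\<lambda>z. \<lambda>i\<in>{..<n}. z i + x a i) -` D a \<inter> space G)"
    proof -
      have "(\<lambda>z. \<lambda>i\<in>{..<n}. z i + x a i) -` D a \<inter> space G = E a"
      proof
        show "(\<lambda>z. \<lambda>i\<in>{..<n}. z i + x a i) -` D a \<inter> space G \<subseteq> E a"
        proof
          fix z assume z: "z \<in> (\<lambda>z. \<lambda>i\<in>{..<n}. z i + x a i) -` D a \<inter> space G"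
          then have "z \<in> extensional {..<n}" unfolding spG by (simp add: space_PiM PiE_def)
          then have "(\<lambda>i\<in>{..<n}. (\<lambda>i\<in>{..<n}. z i + x a i) i - x a i) = z"
            by (auto simp: extensional_def fun_eq_iff)
          with z show "z \<in> E a" unfolding D_def by auto
        qed
        show "E a \<subseteq> (\<lambda>z. \<lambda>i\<in>{..<n}. z i + x a i) -` D a \<inter> space G"
        proof
          fix z assume z: "z \<in> E a"
          then have zs: "z \<in> space G" using E[OF a] sets.sets_into_space unfolding G_def by blast
          then have "z \<in> extensional {..<n}" unfolding spG by (simp add: space_PiM PiE_def)
          then have "(\<lambda>i\<in>{..<n}. (\<lambda>i\<in>{..<n}. z i + x a i) i - x a i) = z"
            by (auto simp: extensional_def fun_eq_iff)
          moreover have "(\<lambda>i\<in>{..<n}. z i + x a i) \<in> space Q" unfolding spQ by (simp add: space_PiM)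
          ultimately show "z \<in> (\<lambda>z. \<lambda>i\<in>{..<n}. z i + x a i) -` D a \<inter> space G"
            using z zs unfolding D_def by auto
        qed
      qed
      then show ?thesis by simp
    qed
    also have "\<dots> = emeasure (distr G (PiM {..<n} (\<lambda>_. borel)) (\<lambda>z. \<lambda>i\<in>{..<n}. z i + x a i)) (D a)"
    proof (rule emeasure_distr[symmetric])
      show "(\<lambda>z. \<lambda>i\<in>{..<n}. z i + x a i) \<in> G \<rightarrow>\<^sub>M PiM {..<n} (\<lambda>_. borel)"
        unfolding measurable_cong_sets[OF sG refl] by (intro measurable_restrict) measurable
      show "D a \<in> sets (PiM {..<n} (\<lambda>_. borel))" using Dm[OF a] sQ by simp
    qed
    also have "distr G (PiM {..<n} (\<lambda>_. borel)) (\<lambda>z. \<lambda>i\<in>{..<n}. z i + x a i)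
        = PiM {..<n} (\<lambda>i. density lborel (normal_density (x a i) \<sigma>))"
      unfolding G_def by (rule pim_shift[OF \<sigma>(1)])
    also have "\<dots> = density Q (\<lambda>y. \<Prod>i\<in>{..<n}. ennreal (normal_density (x a i) \<sigma> (y i) / normal_density (c i) \<tau> (y i)))"
      unfolding Q_def by (rule pim_density[symmetric]) (use \<tau> \<sigma> in auto)
    also have "emeasure \<dots> (D a) = (\<integral>\<^sup>+y. (\<Prod>i\<in>{..<n}. ennreal (normal_density (x a i) \<sigma> (y i) / normal_density (c i) \<tau> (y i))) * indicator (D a) y \<partial>Q)"
      using Dm[OF a] unfolding Q_def by (subst emeasure_density) (auto simp: Q_def)
    also have "\<dots> = (\<integral>\<^sup>+y. ennreal (rr a y) * indicator (D a) y \<partial>Q)"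
      unfolding rr_def by (subst prod_ennreal) auto
    finally show ?thesis .
  qed
  have step34: "(\<integral>\<^sup>+y. ennreal (rr a y) * indicator (D a) y \<partial>Q)
      \<le> ennreal (exp \<gamma>) * emeasure Q (D a) + ennreal (exp (-s*\<gamma>)) * (\<Prod>i<n. ennreal (gint \<sigma> \<tau> s (x a i - c i)))"
    if a: "a \<in> A" for a
  proof -
    have "(\<integral>\<^sup>+y. ennreal (rr a y) * indicator (D a) y \<partial>Q)
       \<le> (\<integral>\<^sup>+y. ennreal (exp \<gamma>) * indicator (D a) y + ennreal (exp (-s*\<gamma>)) *
             (\<Prod>i<n. ennreal ((normal_density (x a i) \<sigma> (y i) / normal_density (c i) \<tau> (y i)) powr (1+s))) \<partial>Q)"
    proof (intro nn_integral_mono)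
      fix y
      have "rr a y * indicator (D a) y \<le> exp \<gamma> * indicator (D a) y + exp (-s*\<gamma>) * rr a y powr (1+s)"
        by (rule pointwise_cm[OF rr_nn s])
      also have "rr a y powr (1+s) = (\<Prod>i<n. (normal_density (x a i) \<sigma> (y i) / normal_density (c i) \<tau> (y i)) powr (1+s))"
        unfolding rr_def by (rule prod_powr_distrib)
      finally have *: "rr a y * indicator (D a) y \<le> exp \<gamma> * indicator (D a) y + exp (-s*\<gamma>) *
          (\<Prod>i<n. (normal_density (x a i) \<sigma> (y i) / normal_density (c i) \<tau> (y i)) powr (1+s))" .
      show "ennreal (rr a y) * indicator (D a) y \<le> ennreal (exp \<gamma>) * indicator (D a) y + ennreal (exp (-s*\<gamma>)) *
             (\<Prod>i<n. ennreal ((normal_density (x a i) \<sigma> (y i) / normal_density (c i) \<tau> (y i)) powr (1+s)))"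
      proof -
        have l: "ennreal (rr a y) * indicator (D a) y = ennreal (rr a y * indicator (D a) y)"
          by (auto simp: indicator_def)
        have pp: "(\<Prod>i<n. ennreal ((normal_density (x a i) \<sigma> (y i) / normal_density (c i) \<tau> (y i)) powr (1+s)))
           = ennreal (\<Prod>i<n. (normal_density (x a i) \<sigma> (y i) / normal_density (c i) \<tau> (y i)) powr (1+s))"
          by (rule prod_ennreal) auto
        have r: "ennreal (exp \<gamma>) * indicator (D a) y + ennreal (exp (-s*\<gamma>)) *
             ennreal (\<Prod>i<n. (normal_density (x a i) \<sigma> (y i) / normal_density (c i) \<tau> (y i)) powr (1+s))
           = ennreal (exp \<gamma> * indicator (D a) y + exp (-s*\<gamma>) *
          (\<Prod>i<n. (normal_density (x a i) \<sigma> (y i) / normal_density (c i) \<tau> (y i)) powr (1+s)))"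
          by (cases "y \<in> D a") (auto simp: indicator_def ennreal_mult' ennreal_plus prod_nonneg)
        show ?thesis unfolding l pp r using * by (rule ennreal_leI)
      qed
    qed
    also have "\<dots> = ennreal (exp \<gamma>) * (\<integral>\<^sup>+y. indicator (D a) y \<partial>Q) + ennreal (exp (-s*\<gamma>)) *
          (\<integral>\<^sup>+y. (\<Prod>i<n. ennreal ((normal_density (x a i) \<sigma> (y i) / normal_density (c i) \<tau> (y i)) powr (1+s))) \<partial>Q)"
      using Dm[OF a]
      by (subst nn_integral_add) (auto simp: nn_integral_cmult Q_def)
    also have "(\<integral>\<^sup>+y. indicator (D a) y \<partial>Q) = emeasure Q (D a)"
      using Dm[OF a] by simp
    also have "(\<integral>\<^sup>+y. (\<Prod>i<n. ennreal ((normal_density (x a i) \<sigma> (y i) / normal_density (c i) \<tau> (y i)) powr (1+s))) \<partial>Q)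
       = (\<Prod>i<n. \<integral>\<^sup>+y. ennreal ((normal_density (x a i) \<sigma> y / normal_density (c i) \<tau> y) powr (1+s)) \<partial>density lborel (normal_density (c i) \<tau>))"
      unfolding Q_def by (intro Qp.product_nn_integral_prod) auto
    also have "\<dots> = (\<Prod>i<n. ennreal (gint \<sigma> \<tau> s (x a i - c i)))"
      by (intro prod.cong refl gint_integral \<sigma> s)
    finally show ?thesis .
  qed
  have disjD: "disjoint_family_on D A"
    unfolding disjoint_family_on_def
  proof (intro ballI impI)
    fix a a' assume aa: "a \<in> A" "a' \<in> A" "a \<noteq> a'"
    show "D a \<inter> D a' = {}"
    proof (rule ccontr)
      assume "D a \<inter> D a' \<noteq> {}"
      then obtain y where y: "y \<in> D a" "y \<in> D a'" by auto
      have "a = a'"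
        by (rule disj[OF aa(1,2), of "\<lambda>i\<in>{..<n}. y i - x a i" "\<lambda>i\<in>{..<n}. y i - x a' i"])
           (use y in \<open>auto simp: D_def\<close>)
      with aa show False by simp
    qed
  qed
  have sumD: "(\<Sum>a\<in>A. emeasure Q (D a)) \<le> 1"
  proof -
    have "(\<Sum>a\<in>A. emeasure Q (D a)) = emeasure Q (\<Union>a\<in>A. D a)"
      using Dm disjD fin by (intro sum_emeasure) auto
    also have "\<dots> \<le> 1" by (rule Qps.emeasure_le_1)
    finally show ?thesis .
  qed
  have "(\<Sum>a\<in>A. emeasure (PiM {..<n} (\<lambda>_. gauss \<sigma>)) (E a))
      \<le> (\<Sum>a\<in>A. ennreal (exp \<gamma>) * emeasure Q (D a) + ennreal (exp (-s*\<gamma>)) * (\<Prod>i<n. ennreal (gint \<sigma> \<tau> s (x a i - c i))))"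
    using step12 step34 unfolding G_def[symmetric] by (intro sum_mono) auto
  also have "\<dots> = ennreal (exp \<gamma>) * (\<Sum>a\<in>A. emeasure Q (D a)) + ennreal (exp (-s*\<gamma>)) * (\<Sum>a\<in>A. \<Prod>i<n. ennreal (gint \<sigma> \<tau> s (x a i - c i)))"
    by (simp add: sum.distrib sum_distrib_left)
  also have "\<dots> \<le> ennreal (exp \<gamma>) * 1 + ennreal (exp (-s*\<gamma>)) * (\<Sum>a\<in>A. \<Prod>i<n. ennreal (gint \<sigma> \<tau> s (x a i - c i)))"
    using sumD by (intro add_mono mult_left_mono) auto
  finally show ?thesis by simp
qed



definition gK0 :: "real \<Rightarrow> real \<Rightarrow> real \<Rightarrow> real" where
  "gK0 \<sigma> \<tau> s = -(1+s)*ln \<sigma> + s*ln \<tau> - ln (alph \<sigma> \<tau> s)/2"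

definition gK1 :: "real \<Rightarrow> real \<Rightarrow> real \<Rightarrow> real" where
  "gK1 \<sigma> \<tau> s = s*(1+s)/(2*\<sigma>\<^sup>2*\<tau>\<^sup>2*alph \<sigma> \<tau> s)"

lemma gint_eq: "gint \<sigma> \<tau> s d = exp (gK0 \<sigma> \<tau> s + gK1 \<sigma> \<tau> s * d\<^sup>2)"
  unfolding gint_def gK0_def gK1_def by (simp add: algebra_simps)

lemma gK1_nonneg: "0 < \<sigma> \<Longrightarrow> \<sigma> \<le> \<tau> \<Longrightarrow> 0 < s \<Longrightarrow> 0 \<le> gK1 \<sigma> \<tau> s"
  unfolding gK1_def using alph_pos[of \<sigma> \<tau> s] by simp

lemma prod_gint_le:
  fixes n :: nat and d :: "nat \<Rightarrow> real" and T :: real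
  assumes "0 < \<sigma>" "\<sigma> \<le> \<tau>" "0 < s" "(\<Sum>i<n. (d i)\<^sup>2) \<le> n * T"
  shows "(\<Prod>i<n. gint \<sigma> \<tau> s (d i)) \<le> exp (n * (gK0 \<sigma> \<tau> s + gK1 \<sigma> \<tau> s * T))"
proof -
  have "(\<Prod>i<n. gint \<sigma> \<tau> s (d i)) = exp (\<Sum>i<n. gK0 \<sigma> \<tau> s + gK1 \<sigma> \<tau> s * (d i)\<^sup>2)"
    unfolding gint_eq by (subst exp_sum) auto
  also have "(\<Sum>i<n. gK0 \<sigma> \<tau> s + gK1 \<sigma> \<tau> s * (d i)\<^sup>2) = n * gK0 \<sigma> \<tau> s + gK1 \<sigma> \<tau> s * (\<Sum>i<n. (d i)\<^sup>2)"
    by (simp add: sum.distrib sum_distrib_left)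
  also have "\<dots> \<le> n * gK0 \<sigma> \<tau> s + gK1 \<sigma> \<tau> s * (n * T)"
    using assms gK1_nonneg[of \<sigma> \<tau> s] by (intro add_left_mono mult_left_mono) auto
  finally show ?thesis by (simp add: algebra_simps)
qed

lemma prob_G: "0 < \<sigma> \<Longrightarrow> prob_space (PiM {..<n} (\<lambda>_. gauss \<sigma>))"
  by (intro prob_space_PiM prob_gauss)

lemma awgn_count:
  fixes n :: nat and \<sigma> \<tau> s \<gamma> T :: real and A :: "'a set" and x :: "'a \<Rightarrow> nat \<Rightarrow> real"
    and c :: "nat \<Rightarrow> real" and E :: "'a \<Rightarrow> (nat \<Rightarrow> real) set"
  assumes \<sigma>: "0 < \<sigma>" "\<sigma> \<le> \<tau>" and s: "0 < s" and fin: "finite A"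
    and E: "\<And>a. a \<in> A \<Longrightarrow> E a \<in> sets (PiM {..<n} (\<lambda>_. gauss \<sigma>))"
    and disj: "\<And>a a' z z'. a \<in> A \<Longrightarrow> a' \<in> A \<Longrightarrow> z \<in> E a \<Longrightarrow> z' \<in> E a' \<Longrightarrow>
               (\<And>i. i < n \<Longrightarrow> x a i + z i = x a' i + z' i) \<Longrightarrow> a = a'"
  shows "(\<Sum>a\<in>A. measure (PiM {..<n} (\<lambda>_. gauss \<sigma>)) (E a))
     \<le> real (card {a\<in>A. n * T < (\<Sum>i<n. (x a i - c i)\<^sup>2)}) + exp \<gamma>
        + exp (-s*\<gamma>) * card A * exp (n * (gK0 \<sigma> \<tau> s + gK1 \<sigma> \<tau> s * T))"
proof -
  define G where "G = PiM {..<n} (\<lambda>_. gauss \<sigma>)"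
  interpret Gp: prob_space G unfolding G_def using \<sigma>(1) by (rule prob_G)
  define B where "B = {a\<in>A. n * T < (\<Sum>i<n. (x a i - c i)\<^sup>2)}"
  define Gd where "Gd = {a\<in>A. \<not> n * T < (\<Sum>i<n. (x a i - c i)\<^sup>2)}"
  have AB: "A = B \<union> Gd" "B \<inter> Gd = {}" unfolding B_def Gd_def by auto
  have finB: "finite B" "finite Gd" using fin unfolding B_def Gd_def by auto
  have "(\<Sum>a\<in>A. measure G (E a)) = (\<Sum>a\<in>B. measure G (E a)) + (\<Sum>a\<in>Gd. measure G (E a))"
    using AB finB by (simp add: sum.union_disjoint)
  also have "(\<Sum>a\<in>B. measure G (E a)) \<le> (\<Sum>a\<in>B. 1)" by (intro sum_mono) auto
  also have "(\<Sum>a\<in>Gd. measure G (E a)) \<le> exp \<gamma> + exp (-s*\<gamma>) * card A * exp (n * (gK0 \<sigma> \<tau> s + gK1 \<sigma> \<tau> s * T))"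
  proof -
    have core: "(\<Sum>a\<in>Gd. emeasure G (E a))
       \<le> ennreal (exp \<gamma>) + ennreal (exp (-s*\<gamma>)) * (\<Sum>a\<in>Gd. \<Prod>i<n. ennreal (gint \<sigma> \<tau> s (x a i - c i)))"
      unfolding G_def
      by (rule awgn_core[OF \<sigma> s finB(2)]) (auto simp: Gd_def intro: E disj)
    have "(\<Sum>a\<in>Gd. \<Prod>i<n. ennreal (gint \<sigma> \<tau> s (x a i - c i))) = ennreal (\<Sum>a\<in>Gd. \<Prod>i<n. gint \<sigma> \<tau> s (x a i - c i))"
      by (simp add: prod_ennreal gint_def sum_ennreal prod_nonneg)
    moreover have "(\<Sum>a\<in>Gd. emeasure G (E a)) = ennreal (\<Sum>a\<in>Gd. measure G (E a))"
      by (simp add: Gp.emeasure_eq_measure sum_ennreal)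
    ultimately have "ennreal (\<Sum>a\<in>Gd. measure G (E a)) \<le> ennreal (exp \<gamma> + exp (-s*\<gamma>) * (\<Sum>a\<in>Gd. \<Prod>i<n. gint \<sigma> \<tau> s (x a i - c i)))"
      using core by (simp add: ennreal_plus ennreal_mult' sum_nonneg prod_nonneg gint_def)
    then have "(\<Sum>a\<in>Gd. measure G (E a)) \<le> exp \<gamma> + exp (-s*\<gamma>) * (\<Sum>a\<in>Gd. \<Prod>i<n. gint \<sigma> \<tau> s (x a i - c i))"
      by (subst (asm) ennreal_le_iff) (auto intro!: add_nonneg_nonneg mult_nonneg_nonneg sum_nonneg prod_nonneg simp: gint_def)
    also have "(\<Sum>a\<in>Gd. \<Prod>i<n. gint \<sigma> \<tau> s (x a i - c i)) \<le> (\<Sum>a\<in>Gd. exp (n * (gK0 \<sigma> \<tau> s + gK1 \<sigma> \<tau> s * T)))"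
    proof (intro sum_mono)
      fix a assume "a \<in> Gd"
      then have "(\<Sum>i<n. (x a i - c i)\<^sup>2) \<le> n * T" by (auto simp: Gd_def)
      from prod_gint_le[OF \<sigma> s this] show "(\<Prod>i<n. gint \<sigma> \<tau> s (x a i - c i)) \<le> exp (n * (gK0 \<sigma> \<tau> s + gK1 \<sigma> \<tau> s * T))" .
    qed
    also have "\<dots> = card Gd * exp (n * (gK0 \<sigma> \<tau> s + gK1 \<sigma> \<tau> s * T))" by simp
    also have "\<dots> \<le> card A * exp (n * (gK0 \<sigma> \<tau> s + gK1 \<sigma> \<tau> s * T))"
      using fin by (intro mult_right_mono) (auto simp: Gd_def intro!: card_mono)
    finally show ?thesis by (simp add: mult_left_mono algebra_simps)
  qed
  finally show ?thesis unfolding G_def B_def by simp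
qed



lemma lin_limit:
  fixes a b k :: real and N :: nat
  assumes "\<And>n. n \<ge> N \<Longrightarrow> real n * a \<le> real n * b + k"
  shows "a \<le> b"
proof (rule ccontr)
  assume "\<not> a \<le> b"
  then have ab: "0 < a - b" by simp
  define n where "n = max N (nat \<lceil>k/(a-b)\<rceil> + 1)"
  have "k/(a-b) < real n" unfolding n_def by linarith
  then have "k < real n * (a-b)" using ab by (simp add: divide_less_eq mult.commute)
  moreover have "real n * a \<le> real n * b + k" using assms[of n] unfolding n_def by simp
  ultimately show False by (simp add: algebra_simps)
qed

lemma eps_limit:
  fixes X C K :: real
  assumes "\<And>\<eta>. 0 < \<eta> \<Longrightarrow> \<eta> \<le> 1 \<Longrightarrow> X \<le> C + \<eta> * K" "0 \<le> K"
  shows "X \<le> C"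
proof (rule ccontr)
  assume "\<not> X \<le> C"
  then have d: "0 < X - C" by simp
  define \<eta> where "\<eta> = min 1 ((X - C)/(2 * (K+1)))"
  have e: "0 < \<eta>" "\<eta> \<le> 1" unfolding \<eta>_def using d assms(2) by auto
  have "\<eta> * K \<le> (X - C)/(2 * (K+1)) * K" unfolding \<eta>_def using assms(2) by (intro mult_right_mono) auto
  also have "\<dots> < X - C"
  proof -
    have "(X - C)/(2 * (K+1)) * K = (X - C) * (K / (2 * (K+1)))" by simp
    also have "\<dots> < (X - C) * 1" using d assms(2) by (intro mult_strict_left_mono) auto
    finally show ?thesis by simp
  qed
  finally show False using assms(1)[OF e] by simp
qed

lemma f_bound:
  fixes \<sigma> P s T :: real
  assumes \<sigma>: "0 < \<sigma>" and P: "0 \<le> P" and s: "0 < s" "s \<le> 1" and T: "0 \<le> T"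
  defines "\<tau> \<equiv> sqrt (\<sigma>\<^sup>2 + P)"
  shows "(gK0 \<sigma> \<tau> s + gK1 \<sigma> \<tau> s * T)/s \<le> ln (1 + P/\<sigma>\<^sup>2)/2 + s/2 + ((1+s) * T - P)/(2 * (\<sigma>\<^sup>2+P))"
proof -
  have t2: "\<tau>\<^sup>2 = \<sigma>\<^sup>2 + P" unfolding \<tau>_def using P by simp
  have tp: "0 < \<tau>" unfolding \<tau>_def using \<sigma> P by (simp add: add_pos_nonneg)
  have sp: "0 < \<sigma>\<^sup>2 + P" using \<sigma> P by (simp add: add_pos_nonneg)
  define u where "u = P/(\<sigma>\<^sup>2+P)"
  have u: "0 \<le> u" "u \<le> 1" unfolding u_def using P sp by auto
  have su: "0 \<le> s * u" "s * u \<le> 1" using u s by (auto simp: mult_le_one)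
  have al: "alph \<sigma> \<tau> s = (1 + s * u)/\<sigma>\<^sup>2"
    unfolding alph_def t2 u_def using \<sigma> sp by (simp add: field_simps)
  have lal: "ln (alph \<sigma> \<tau> s) = ln (1 + s * u) - 2 * ln \<sigma>"
    unfolding al using su \<sigma> by (simp add: ln_div ln_realpow)
  have lt: "ln \<tau> - ln \<sigma> = ln (1 + P/\<sigma>\<^sup>2)/2"
  proof -
    have "ln (1 + P/\<sigma>\<^sup>2) = ln (\<tau>\<^sup>2/\<sigma>\<^sup>2)" unfolding t2 using \<sigma> by (simp add: field_simps)
    also have "\<dots> = 2 * ln \<tau> - 2 * ln \<sigma>" using tp \<sigma> by (simp add: ln_div ln_realpow)
    finally show ?thesis by simp
  qed
  have K0: "gK0 \<sigma> \<tau> s / s = ln (1 + P/\<sigma>\<^sup>2)/2 - ln (1 + s * u)/(2 * s)"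
  proof -
    have "gK0 \<sigma> \<tau> s = s * (ln \<tau> - ln \<sigma>) - ln (1 + s * u)/2"
      unfolding gK0_def lal by (simp add: algebra_simps diff_divide_distrib)
    then show ?thesis unfolding lt using s by (simp add: field_simps)
  qed
  have K1: "gK1 \<sigma> \<tau> s * T / s = (1+s) * T/(2 * (\<sigma>\<^sup>2+P) * (1+s * u))"
  proof -
    have "0 < 1 + s * u" using su by linarith
    have d: "2 * \<sigma>\<^sup>2 * \<tau>\<^sup>2 * alph \<sigma> \<tau> s = 2 * (\<sigma>\<^sup>2+P) * (1 + s * u)"
      unfolding al t2 using \<sigma> by simp
    show ?thesis unfolding gK1_def d using s by simp
  qed
  have b1: "- ln (1 + s * u)/(2 * s) \<le> - u/2 + s/2"
  proof -
    have "s * u - (s * u)\<^sup>2 \<le> ln (1 + s * u)" by (rule ln_one_plus_pos_lower_bound[OF su])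
    then have "- ln (1 + s * u) \<le> - s * u + s\<^sup>2 * u\<^sup>2" by (simp add: power_mult_distrib)
    also have "\<dots> \<le> - s * u + s\<^sup>2" using u s by (intro add_left_mono mult_left_le) (auto simp: power_le_one)
    finally have "- ln (1 + s * u) \<le> - s * u + s\<^sup>2" .
    then have "- ln (1 + s * u)/(2 * s) \<le> (- s * u + s\<^sup>2)/(2 * s)" using s by (intro divide_right_mono) auto
    also have "\<dots> = - u/2 + s/2" using s by (simp add: field_simps power2_eq_square)
    finally show ?thesis .
  qed
  have b2: "(1+s) * T/(2 * (\<sigma>\<^sup>2+P) * (1+s * u)) \<le> (1+s) * T/(2 * (\<sigma>\<^sup>2+P))"
  proof -
    have "(1+s) * T/(2 * (\<sigma>\<^sup>2+P) * (1+s * u)) = ((1+s) * T/(2 * (\<sigma>\<^sup>2+P))) / (1+s * u)" by simp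
    also have "\<dots> \<le> ((1+s) * T/(2 * (\<sigma>\<^sup>2+P))) / 1" using su s T sp
      by (intro divide_left_mono) (auto intro!: divide_nonneg_pos mult_nonneg_nonneg)
    finally show ?thesis by simp
  qed
  have "(gK0 \<sigma> \<tau> s + gK1 \<sigma> \<tau> s * T)/s = gK0 \<sigma> \<tau> s / s + gK1 \<sigma> \<tau> s * T / s"
    by (simp add: add_divide_distrib)
  also have "\<dots> \<le> ln (1 + P/\<sigma>\<^sup>2)/2 - u/2 + s/2 + (1+s) * T/(2 * (\<sigma>\<^sup>2+P))"
    unfolding K0 K1 using b1 b2 by (simp only: minus_divide_left)
  also have "\<dots> = ln (1 + P/\<sigma>\<^sup>2)/2 + s/2 + ((1+s) * T - P)/(2 * (\<sigma>\<^sup>2+P))"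
  proof -
    have "u/2 = P/(2 * (\<sigma>\<^sup>2+P))" unfolding u_def by simp
    moreover have "((1+s) * T - P)/(2 * (\<sigma>\<^sup>2+P)) = (1+s) * T/(2 * (\<sigma>\<^sup>2+P)) - P/(2 * (\<sigma>\<^sup>2+P))"
      by (rule diff_divide_distrib)
    ultimately show ?thesis by linarith
  qed
  finally show ?thesis .
qed



lemma rate_bound:
  fixes Wm R P \<sigma> :: real
  assumes Wm: "0 < Wm" and \<sigma>: "0 < \<sigma>" and P: "0 \<le> P"
  and H: "\<And>\<epsilon>. \<epsilon> > 0 \<Longrightarrow> \<exists>N. \<forall>n\<ge>N. \<exists>M::real. 2 powr (real n * R / (2 * Wm)) \<le> M \<and>
      (\<forall>T s \<gamma>. P < T \<longrightarrow> 0 < s \<longrightarrow> s \<le> 1 \<longrightarrow>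
         (1 - \<epsilon>) * M \<le> M * P / T + exp \<gamma> + M * exp (- s * \<gamma>) *
            exp (real n * (gK0 \<sigma> (sqrt (\<sigma>\<^sup>2 + P)) s + gK1 \<sigma> (sqrt (\<sigma>\<^sup>2 + P)) s * T)))"
  shows "R \<le> Wm * log 2 (1 + P / \<sigma>\<^sup>2)"
proof -
  define \<tau> where "\<tau> = sqrt (\<sigma>\<^sup>2 + P)"
  define X where "X = R * ln 2 / (2 * Wm)"
  define C where "C = ln (1 + P / \<sigma>\<^sup>2) / 2"
  have sp: "0 < \<sigma>\<^sup>2 + P" using \<sigma> P by (simp add: add_pos_nonneg)
  have step: "X \<le> (gK0 \<sigma> \<tau> s + gK1 \<sigma> \<tau> s * (P + \<delta>)) / s" if d: "0 < \<delta>" and s: "0 < s" "s \<le> 1" for \<delta> s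
  proof -
    define T where "T = P + \<delta>"
    have Tp: "0 < T" "P < T" unfolding T_def using d P by auto
    define \<epsilon> where "\<epsilon> = \<delta> / (4 * T)"
    define t where "t = ln (4 * T / \<delta>) / s"
    define F where "F = gK0 \<sigma> \<tau> s + gK1 \<sigma> \<tau> s * T"
    have ep: "0 < \<epsilon>" unfolding \<epsilon>_def using d Tp by auto
    have et: "exp (- s * t) = \<delta> / (4 * T)"
    proof -
      have "- s * t = ln (\<delta> / (4 * T))" unfolding t_def using s d Tp by (simp add: ln_div)
      then show ?thesis using d Tp by simp
    qed
    obtain N where N: "\<forall>n\<ge>N. \<exists>M::real. 2 powr (real n * R / (2 * Wm)) \<le> M \<and>
      (\<forall>T s \<gamma>. P < T \<longrightarrow> 0 < s \<longrightarrow> s \<le> 1 \<longrightarrow>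
         (1 - \<epsilon>) * M \<le> M * P / T + exp \<gamma> + M * exp (- s * \<gamma>) *
            exp (real n * (gK0 \<sigma> \<tau> s + gK1 \<sigma> \<tau> s * T)))"
      using H[OF ep] unfolding \<tau>_def by blast
    have "real n * X \<le> real n * (F / s) + (t - ln (\<delta> / (2 * T)))" if n: "n \<ge> N" for n
    proof -
      obtain M where M1: "2 powr (real n * R / (2 * Wm)) \<le> M" and
        M2: "\<And>T s \<gamma>. P < T \<Longrightarrow> 0 < s \<Longrightarrow> s \<le> 1 \<Longrightarrow>
         (1 - \<epsilon>) * M \<le> M * P / T + exp \<gamma> + M * exp (- s * \<gamma>) *
            exp (real n * (gK0 \<sigma> \<tau> s + gK1 \<sigma> \<tau> s * T))"
        using N n by blast
      have Mp: "0 < M" using M1 by (rule less_le_trans[rotated]) simp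
      define \<gamma> where "\<gamma> = real n * F / s + t"
      have e1: "exp (- s * \<gamma>) * exp (real n * F) = \<delta> / (4 * T)"
      proof -
        have "- s * \<gamma> + real n * F = - s * t" unfolding \<gamma>_def using s by (simp add: field_simps)
        then have "exp (- s * \<gamma> + real n * F) = exp (- s * t)" by simp
        then show ?thesis unfolding et exp_add[symmetric] .
      qed
      have "(1 - \<epsilon>) * M \<le> M * P / T + exp \<gamma> + M * exp (- s * \<gamma>) * exp (real n * F)"
        using M2[OF Tp(2) s] unfolding F_def .
      then have "(1 - \<epsilon>) * M \<le> M * P / T + exp \<gamma> + M * (\<delta> / (4 * T))"
        using e1 by (simp add: mult.assoc)
      moreover have "(1 - \<epsilon>) * M - M * P / T - M * (\<delta> / (4 * T)) = M * (\<delta> / (2 * T))"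
      proof -
        have PT: "P = T - \<delta>" unfolding T_def by simp
        show ?thesis unfolding \<epsilon>_def PT using Tp by (simp add: field_simps)
      qed
      ultimately have Mle: "M * (\<delta> / (2 * T)) \<le> exp \<gamma>" by linarith
      have "ln (M * (\<delta> / (2 * T))) \<le> ln (exp \<gamma>)"
        using Mle Mp d Tp by (subst ln_le_cancel_iff) auto
      then have "ln (M * (\<delta> / (2 * T))) \<le> \<gamma>" by simp
      moreover have "ln (M * (\<delta> / (2 * T))) = ln M + ln (\<delta> / (2 * T))"
        using Mp d Tp by (intro ln_mult_pos) auto
      ultimately have "ln M + ln (\<delta> / (2 * T)) \<le> \<gamma>" by simp
      moreover have "real n * R / (2 * Wm) * ln 2 \<le> ln M"
      proof -
        have "ln (2 powr (real n * R / (2 * Wm))) \<le> ln M" using M1 Mp by (subst ln_le_cancel_iff) auto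
        then show ?thesis by (simp add: ln_powr)
      qed
      moreover have "real n * R / (2 * Wm) * ln 2 = real n * X" unfolding X_def by simp
      moreover have "\<gamma> = real n * (F / s) + t" unfolding \<gamma>_def by simp
      ultimately show ?thesis by linarith
    qed
    then have "X \<le> F / s" by (rule lin_limit[of N])
    then show ?thesis unfolding F_def T_def .
  qed
  have bound: "X \<le> C + \<eta> * (1/2 + (2 + P) / (2 * (\<sigma>\<^sup>2 + P)))" if e: "0 < \<eta>" "\<eta> \<le> 1" for \<eta>
  proof -
    have "X \<le> (gK0 \<sigma> \<tau> \<eta> + gK1 \<sigma> \<tau> \<eta> * (P + \<eta>)) / \<eta>" by (rule step[OF e(1) e])
    also have "\<dots> \<le> C + \<eta>/2 + ((1+\<eta>) * (P + \<eta>) - P) / (2 * (\<sigma>\<^sup>2 + P))"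
      unfolding C_def \<tau>_def using \<sigma> P e by (intro f_bound) auto
    also have "((1+\<eta>) * (P + \<eta>) - P) = \<eta> * (1 + P + \<eta>)" by (simp add: algebra_simps)
    also have "\<eta> * (1 + P + \<eta>) / (2 * (\<sigma>\<^sup>2 + P)) \<le> \<eta> * (2 + P) / (2 * (\<sigma>\<^sup>2 + P))"
      using e sp by (intro divide_right_mono mult_left_mono) auto
    finally show ?thesis by (simp add: algebra_simps add_divide_distrib)
  qed
  have "X \<le> C" by (rule eps_limit[OF bound]) (use P sp in auto)
  then have "R * ln 2 / (2 * Wm) \<le> ln (1 + P / \<sigma>\<^sup>2) / 2" unfolding X_def C_def .
  then have "R * ln 2 / (2 * Wm) * (2 * Wm) \<le> ln (1 + P / \<sigma>\<^sup>2) / 2 * (2 * Wm)"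
    using Wm by (intro mult_right_mono) auto
  then have "R * ln 2 \<le> Wm * ln (1 + P / \<sigma>\<^sup>2)" using Wm by (simp add: mult.commute)
  then have "R \<le> Wm * ln (1 + P / \<sigma>\<^sup>2) / ln 2" by (simp add: pos_le_divide_eq)
  then show ?thesis unfolding log_def by simp
qed



lemma sections_sum_fst:
  fixes A :: "'a measure" and D :: "'b measure" and S :: "'i \<Rightarrow> ('a \<times> 'b) set" and K :: "'b \<Rightarrow> ennreal"
  assumes A: "prob_space A" and D: "prob_space D" and fin: "finite I"
    and S: "\<And>i. i \<in> I \<Longrightarrow> S i \<in> sets (A \<Otimes>\<^sub>M D)" and K: "K \<in> borel_measurable D"
    and b: "\<And>d. d \<in> space D \<Longrightarrow> (\<Sum>i\<in>I. emeasure A ((\<lambda>z. (z, d)) -` S i)) \<le> K d"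
  shows "(\<Sum>i\<in>I. emeasure (A \<Otimes>\<^sub>M D) (S i)) \<le> (\<integral>\<^sup>+d. K d \<partial>D)"
proof -
  interpret A: prob_space A by fact
  interpret D: prob_space D by fact
  interpret AD: pair_sigma_finite A D by standard
  have "(\<Sum>i\<in>I. emeasure (A \<Otimes>\<^sub>M D) (S i)) = (\<Sum>i\<in>I. \<integral>\<^sup>+d. emeasure A ((\<lambda>z. (z, d)) -` S i) \<partial>D)"
    using S by (intro sum.cong refl AD.emeasure_pair_measure_alt2) auto
  also have "\<dots> = (\<integral>\<^sup>+d. (\<Sum>i\<in>I. emeasure A ((\<lambda>z. (z, d)) -` S i)) \<partial>D)"
    using S by (intro nn_integral_sum[symmetric] AD.measurable_emeasure_Pair2) auto
  also have "\<dots> \<le> (\<integral>\<^sup>+d. K d \<partial>D)"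
    using b by (intro nn_integral_mono) auto
  finally show ?thesis .
qed

lemma sections_sum_snd:
  fixes A :: "'a measure" and B :: "'b measure" and C :: "'c measure" and S :: "'i \<Rightarrow> ('a \<times> 'b \<times> 'c) set"
  assumes A: "prob_space A" and B: "prob_space B" and C: "prob_space C" and fin: "finite I"
    and S: "\<And>i. i \<in> I \<Longrightarrow> S i \<in> sets (A \<Otimes>\<^sub>M (B \<Otimes>\<^sub>M C))"
    and b: "\<And>z1 z3. z1 \<in> space A \<Longrightarrow> z3 \<in> space C \<Longrightarrow>
       (\<Sum>i\<in>I. emeasure B ((\<lambda>z2. (z2, z3)) -` (Pair z1 -` S i))) \<le> ennreal K"
  shows "(\<Sum>i\<in>I. emeasure (A \<Otimes>\<^sub>M (B \<Otimes>\<^sub>M C)) (S i)) \<le> ennreal K"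
proof -
  interpret A: prob_space A by fact
  interpret B: prob_space B by fact
  interpret C: prob_space C by fact
  interpret BC: pair_prob_space B C by standard
  interpret ABC: pair_sigma_finite A "B \<Otimes>\<^sub>M C" by standard
  have "(\<Sum>i\<in>I. emeasure (A \<Otimes>\<^sub>M (B \<Otimes>\<^sub>M C)) (S i)) = (\<Sum>i\<in>I. \<integral>\<^sup>+z1. emeasure (B \<Otimes>\<^sub>M C) (Pair z1 -` S i) \<partial>A)"
  proof -
    have sf: "sigma_finite_measure (B \<Otimes>\<^sub>M C)"
      by (intro prob_space_imp_sigma_finite BC.P.prob_space_axioms)
    show ?thesis using S by (intro sum.cong refl sigma_finite_measure.emeasure_pair_measure_alt[OF sf]) auto
  qed
  also have "\<dots> = (\<integral>\<^sup>+z1. (\<Sum>i\<in>I. emeasure (B \<Otimes>\<^sub>M C) (Pair z1 -` S i)) \<partial>A)"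
    using S by (intro nn_integral_sum[symmetric] ABC.measurable_emeasure_Pair1) auto
  also have "\<dots> \<le> (\<integral>\<^sup>+z1. ennreal K \<partial>A)"
  proof (intro nn_integral_mono)
    fix z1 assume z1: "z1 \<in> space A"
    have "(\<Sum>i\<in>I. emeasure (B \<Otimes>\<^sub>M C) (Pair z1 -` S i)) \<le> (\<integral>\<^sup>+z3. ennreal K \<partial>C)"
      using S b z1 by (intro sections_sum_fst B C fin) auto
    also have "\<dots> = ennreal K" by (simp add: C.emeasure_space_1)
    finally show "(\<Sum>i\<in>I. emeasure (B \<Otimes>\<^sub>M C) (Pair z1 -` S i)) \<le> ennreal K" .
  qed
  also have "\<dots> = ennreal K" by (simp add: A.emeasure_space_1)
  finally show ?thesis .
qed

lemma nn_integral_snd_only: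
  fixes A :: "'a measure" and D :: "'b measure"
  assumes A: "prob_space A" and D: "prob_space D" and h: "h \<in> borel_measurable D"
  shows "(\<integral>\<^sup>+\<omega>. h (snd \<omega>) \<partial>(A \<Otimes>\<^sub>M D)) = (\<integral>\<^sup>+d. h d \<partial>D)"
proof -
  interpret A: prob_space A by fact
  interpret D: prob_space D by fact
  interpret AD: pair_sigma_finite A D by standard
  have "(\<integral>\<^sup>+\<omega>. h (snd \<omega>) \<partial>(A \<Otimes>\<^sub>M D)) = (\<integral>\<^sup>+y. (\<integral>\<^sup>+x. h (snd (x, y)) \<partial>A) \<partial>D)"
    using h by (intro AD.nn_integral_snd[symmetric]) (rule measurable_compose[OF measurable_snd h])
  also have "\<dots> = (\<integral>\<^sup>+d. h d \<partial>D)" by (simp add: A.emeasure_space_1)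
  finally show ?thesis .
qed

lemma card_markov:
  fixes q :: "'a \<Rightarrow> real" and L :: real
  assumes "finite A" "0 < L" "\<And>a. a \<in> A \<Longrightarrow> 0 \<le> q a"
  shows "real (card {a\<in>A. L < q a}) \<le> (\<Sum>a\<in>A. q a) / L"
proof -
  have "real (card {a\<in>A. L < q a}) = (\<Sum>a\<in>A. if L < q a then 1 else 0)"
  proof -
    have "{a\<in>A. L < q a} = A \<inter> {a. L < q a}" by auto
    then show ?thesis using assms(1) by (simp add: sum.If_cases)
  qed
  also have "\<dots> \<le> (\<Sum>a\<in>A. q a / L)"
    using assms by (intro sum_mono) auto
  also have "\<dots> = (\<Sum>a\<in>A. q a) / L" by (simp add: sum_divide_distrib)
  finally show ?thesis .
qed



lemma sigY2_eq:
  assumes "\<And>i. i < n \<Longrightarrow> g2 * sigX2 n f2 a i + z i = g2 * sigX2 n f2 a' i + z' i"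
  shows "sigY2 n g2 f2 a z = sigY2 n g2 f2 a' z'"
  using assms unfolding sigY2_def trunc_def by (auto simp: fun_eq_iff)

lemma code_R2:
  fixes Wm Ws g1 g21m g2 g21s \<sigma> P1 P2 \<epsilon> T s \<gamma> :: real and n M1 M2 :: nat
  assumes \<sigma>: "0 < \<sigma>" and P2: "0 \<le> P2" and code: "is_code Wm Ws g1 g21m g2 g21s \<sigma> P1 P2 n M1 M2 \<epsilon>"
    and T: "g2\<^sup>2 * P2 < T" and s: "0 < s" "s \<le> 1"
  shows "(1 - \<epsilon>) * real M2 \<le> real M2 * (g2\<^sup>2 * P2) / T + exp \<gamma> + real M2 * exp (- s * \<gamma>) *
            exp (real n * (gK0 \<sigma> (sqrt (\<sigma>\<^sup>2 + g2\<^sup>2 * P2)) s + gK1 \<sigma> (sqrt (\<sigma>\<^sup>2 + g2\<^sup>2 * P2)) s * T))"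
proof -
  define m where "m = side_len Wm Ws n"
  define Z where "Z = PiM {..<n} (\<lambda>_. gauss \<sigma>)"
  define Zm where "Zm = PiM {..<m} (\<lambda>_. gauss \<sigma>)"
  define \<tau> where "\<tau> = sqrt (\<sigma>\<^sup>2 + g2\<^sup>2 * P2)"
  define F where "F = gK0 \<sigma> \<tau> s + gK1 \<sigma> \<tau> s * T"
  have Nd: "noise \<sigma> n m = Z \<Otimes>\<^sub>M (Z \<Otimes>\<^sub>M Zm)" unfolding noise_def Z_def Zm_def ..
  have "0 \<le> g2\<^sup>2 * P2" using P2 by simp
  then have Tp: "0 < T" using T by linarith
  have \<sigma>\<tau>: "\<sigma> \<le> \<tau>" unfolding \<tau>_def using \<sigma> P2
    by (intro real_le_rsqrt) (auto)
  interpret Zp: prob_space Z unfolding Z_def using \<sigma> by (rule prob_G)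
  interpret Zmp: prob_space Zm unfolding Zm_def using \<sigma> by (rule prob_G)
  interpret ZZ: pair_prob_space Z Zm by standard
  interpret N3: pair_prob_space Z "Z \<Otimes>\<^sub>M Zm" by standard
  interpret Np: prob_space "noise \<sigma> n m" unfolding Nd by (rule N3.P.prob_space_axioms)
  from code obtain enc1 :: "nat \<Rightarrow> (nat \<Rightarrow> real) \<Rightarrow> nat \<Rightarrow> real" and f2 f3 :: "nat \<Rightarrow> nat \<Rightarrow> real"
    and dec2 :: "(nat \<Rightarrow> real) \<Rightarrow> (nat \<Rightarrow> real) \<Rightarrow> nat" and decBS :: "nat \<Rightarrow> (nat \<Rightarrow> real) \<Rightarrow> nat" where
    n0: "0 < n" and M10: "0 < M1" and M20: "0 < M2" and
    errm: "\<forall>s1<M1. \<forall>s2<M2. err_event n m g1 g21m g2 g21s enc1 f2 f3 dec2 decBS s1 s2 \<inter> space (noise \<sigma> n m)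
             \<in> sets (noise \<sigma> n m)" and
    pow2: "(\<Sum>s2<M2. (\<Sum>i<n. (sigX2 n f2 s2 i)\<^sup>2) + (\<Sum>j<m. (sigX3 m f3 s2 j)\<^sup>2)) \<le> real M2 * real n * P2" and
    errs: "(\<Sum>s1<M1. \<Sum>s2<M2. measure (noise \<sigma> n m) (err_event n m g1 g21m g2 g21s enc1 f2 f3 dec2 decBS s1 s2
                                     \<inter> space (noise \<sigma> n m))) \<le> \<epsilon> * real M1 * real M2"
    unfolding is_code_def Let_def m_def by blast
  define err where "err s1 s2 = err_event n m g1 g21m g2 g21s enc1 f2 f3 dec2 decBS s1 s2 \<inter> space (noise \<sigma> n m)" for s1 s2
  define S where "S s1 s2 = space (noise \<sigma> n m) - err s1 s2" for s1 s2
  have Sm: "S s1 s2 \<in> sets (Z \<Otimes>\<^sub>M (Z \<Otimes>\<^sub>M Zm))" if "s1 < M1" "s2 < M2" for s1 s2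
    using errm that unfolding S_def err_def Nd by auto
  define bad where "bad = card {a\<in>{..<M2}. real n * T < (\<Sum>i<n. (g2 * sigX2 n f2 a i - 0)\<^sup>2)}"
  have badle: "real bad \<le> real M2 * (g2\<^sup>2 * P2) / T"
  proof -
    have "real bad \<le> (\<Sum>a<M2. (\<Sum>i<n. (g2 * sigX2 n f2 a i - 0)\<^sup>2)) / (real n * T)"
      unfolding bad_def using n0 Tp by (intro card_markov) (auto intro: sum_nonneg)
    also have "(\<Sum>a<M2. (\<Sum>i<n. (g2 * sigX2 n f2 a i - 0)\<^sup>2)) = g2\<^sup>2 * (\<Sum>a<M2. \<Sum>i<n. (sigX2 n f2 a i)\<^sup>2)"
      by (simp add: power_mult_distrib sum_distrib_left)
    also have "(\<Sum>a<M2. \<Sum>i<n. (sigX2 n f2 a i)\<^sup>2) \<le> real M2 * real n * P2"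
    proof -
      have "(\<Sum>a<M2. \<Sum>i<n. (sigX2 n f2 a i)\<^sup>2) \<le> (\<Sum>s2<M2. (\<Sum>i<n. (sigX2 n f2 s2 i)\<^sup>2) + (\<Sum>j<m. (sigX3 m f3 s2 j)\<^sup>2))"
        by (intro sum_mono) (auto intro: sum_nonneg)
      with pow2 show ?thesis by linarith
    qed
    then have "g2\<^sup>2 * (\<Sum>a<M2. \<Sum>i<n. (sigX2 n f2 a i)\<^sup>2) / (real n * T) \<le> g2\<^sup>2 * (real M2 * real n * P2) / (real n * T)"
      using n0 Tp by (intro divide_right_mono mult_left_mono) auto
    also have "\<dots> = real M2 * (g2\<^sup>2 * P2) / T" using n0 by (simp add: field_simps)
    finally show ?thesis by simp
  qed
  define Kc where "Kc = real bad + exp \<gamma> + exp (- s * \<gamma>) * real M2 * exp (real n * F)"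
  have pers1: "(\<Sum>s2<M2. measure (noise \<sigma> n m) (S s1 s2)) \<le> Kc" if s1: "s1 < M1" for s1
  proof -
    have "(\<Sum>s2<M2. emeasure (Z \<Otimes>\<^sub>M (Z \<Otimes>\<^sub>M Zm)) (S s1 s2)) \<le> ennreal Kc"
    proof (rule sections_sum_snd[OF Zp.prob_space_axioms Zp.prob_space_axioms Zmp.prob_space_axioms])
      show "\<And>i. i \<in> {..<M2} \<Longrightarrow> S s1 i \<in> sets (Z \<Otimes>\<^sub>M (Z \<Otimes>\<^sub>M Zm))" using Sm s1 by auto
      fix z1 z3 assume z1: "z1 \<in> space Z" and z3: "z3 \<in> space Zm"
      define E where "E a = (\<lambda>z2. (z2, z3)) -` (Pair z1 -` S s1 a)" for a
      have Em: "E a \<in> sets Z" if "a \<in> {..<M2}" for a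
        unfolding E_def using Sm[OF s1] that by (auto intro!: sets_Pair2 sets_Pair1)
      have "(\<Sum>a\<in>{..<M2}. measure Z (E a))
         \<le> real (card {a\<in>{..<M2}. real n * T < (\<Sum>i<n. (g2 * sigX2 n f2 a i - 0)\<^sup>2)}) + exp \<gamma>
           + exp (- s * \<gamma>) * card {..<M2} * exp (real n * (gK0 \<sigma> \<tau> s + gK1 \<sigma> \<tau> s * T))"
        unfolding Z_def
      proof (rule awgn_count[OF \<sigma> \<sigma>\<tau> s(1)])
        show "finite {..<M2}" by simp
        show "\<And>a. a \<in> {..<M2} \<Longrightarrow> E a \<in> sets (PiM {..<n} (\<lambda>_. gauss \<sigma>))" using Em unfolding Z_def by auto
        fix a a' z z' assume a: "a \<in> {..<M2}" "a' \<in> {..<M2}" and z: "z \<in> E a" "z' \<in> E a'"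
          and eq: "\<And>i. i < n \<Longrightarrow> g2 * sigX2 n f2 a i + z i = g2 * sigX2 n f2 a' i + z' i"
        from z have "(z1, z, z3) \<notin> err s1 a" "(z1, z', z3) \<notin> err s1 a'"
          "(z1, z, z3) \<in> space (noise \<sigma> n m)" "(z1, z', z3) \<in> space (noise \<sigma> n m)"
          unfolding E_def S_def by auto
        then have "decBS s1 (sigY2 n g2 f2 a z) = a" "decBS s1 (sigY2 n g2 f2 a' z') = a'"
          unfolding err_def err_event_def by (auto simp: Let_def)
        moreover have "sigY2 n g2 f2 a z = sigY2 n g2 f2 a' z'" by (rule sigY2_eq[OF eq])
        ultimately show "a = a'" by simp
      qed
      then have "(\<Sum>a\<in>{..<M2}. measure Z (E a)) \<le> Kc" unfolding Kc_def bad_def F_def by simp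
      moreover have "(\<Sum>a\<in>{..<M2}. emeasure Z (E a)) = ennreal (\<Sum>a\<in>{..<M2}. measure Z (E a))"
        by (simp add: Zp.emeasure_eq_measure sum_ennreal)
      ultimately show "(\<Sum>i\<in>{..<M2}. emeasure Z ((\<lambda>z2. (z2, z3)) -` (Pair z1 -` S s1 i))) \<le> ennreal Kc"
        unfolding E_def by (simp add: ennreal_leI)
    qed simp
    moreover have "(\<Sum>s2<M2. emeasure (Z \<Otimes>\<^sub>M (Z \<Otimes>\<^sub>M Zm)) (S s1 s2)) = ennreal (\<Sum>s2<M2. measure (noise \<sigma> n m) (S s1 s2))"
      unfolding Nd[symmetric] by (simp add: Np.emeasure_eq_measure sum_ennreal)
    moreover have "0 \<le> Kc" unfolding Kc_def by simp
    ultimately show ?thesis by simp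
  qed
  have "(\<Sum>s1<M1. \<Sum>s2<M2. measure (noise \<sigma> n m) (S s1 s2)) = (\<Sum>s1<M1. \<Sum>s2<M2. 1 - measure (noise \<sigma> n m) (err s1 s2))"
    unfolding S_def err_def using errm by (intro sum.cong refl Np.prob_compl) auto
  also have "\<dots> = real M1 * real M2 - (\<Sum>s1<M1. \<Sum>s2<M2. measure (noise \<sigma> n m) (err s1 s2))"
    by (simp add: sum_subtractf)
  finally have "(1 - \<epsilon>) * real M1 * real M2 \<le> (\<Sum>s1<M1. \<Sum>s2<M2. measure (noise \<sigma> n m) (S s1 s2))"
    using errs unfolding err_def by (simp add: algebra_simps)
  also have "\<dots> \<le> (\<Sum>s1<M1. Kc)" by (intro sum_mono pers1) auto
  also have "\<dots> = real M1 * Kc" by simp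
  finally have "real M1 * ((1 - \<epsilon>) * real M2) \<le> real M1 * Kc" by (simp add: algebra_simps)
  then have "(1 - \<epsilon>) * real M2 \<le> Kc" using M10 by simp
  also have "Kc \<le> real M2 * (g2\<^sup>2 * P2) / T + exp \<gamma> + real M2 * exp (- s * \<gamma>) * exp (real n * F)"
    unfolding Kc_def using badle by (simp add: algebra_simps)
  finally show ?thesis unfolding F_def \<tau>_def .
qed



lemma sigY1_eq:
  assumes "\<And>i. i < n \<Longrightarrow> (g1 * sigX1 n g2 enc1 f2 a s2 z2 i + g21m * sigX2 n f2 s2 i) + z i
                        = (g1 * sigX1 n g2 enc1 f2 a' s2 z2 i + g21m * sigX2 n f2 s2 i) + z' i"
  shows "sigY1 n g1 g21m g2 enc1 f2 a s2 z z2 = sigY1 n g1 g21m g2 enc1 f2 a' s2 z' z2"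
  using assms unfolding sigY1_def trunc_def by (auto simp: fun_eq_iff)

lemma code_R1:
  fixes Wm Ws g1 g21m g2 g21s \<sigma> P1 P2 \<epsilon> T s \<gamma> :: real and n M1 M2 :: nat
  assumes \<sigma>: "0 < \<sigma>" and P1: "0 \<le> P1" and code: "is_code Wm Ws g1 g21m g2 g21s \<sigma> P1 P2 n M1 M2 \<epsilon>"
    and T: "g1\<^sup>2 * P1 < T" and s: "0 < s" "s \<le> 1"
  shows "(1 - \<epsilon>) * real M1 \<le> real M1 * (g1\<^sup>2 * P1) / T + exp \<gamma> + real M1 * exp (- s * \<gamma>) *
            exp (real n * (gK0 \<sigma> (sqrt (\<sigma>\<^sup>2 + g1\<^sup>2 * P1)) s + gK1 \<sigma> (sqrt (\<sigma>\<^sup>2 + g1\<^sup>2 * P1)) s * T))"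
proof -
  define m where "m = side_len Wm Ws n"
  define Z where "Z = PiM {..<n} (\<lambda>_. gauss \<sigma>)"
  define Zm where "Zm = PiM {..<m} (\<lambda>_. gauss \<sigma>)"
  define D where "D = Z \<Otimes>\<^sub>M Zm"
  define \<tau> where "\<tau> = sqrt (\<sigma>\<^sup>2 + g1\<^sup>2 * P1)"
  define F where "F = gK0 \<sigma> \<tau> s + gK1 \<sigma> \<tau> s * T"
  have Nd: "noise \<sigma> n m = Z \<Otimes>\<^sub>M D" unfolding noise_def Z_def Zm_def D_def ..
  have "0 \<le> g1\<^sup>2 * P1" using P1 by simp
  then have Tp: "0 < T" using T by linarith
  have \<sigma>\<tau>: "\<sigma> \<le> \<tau>" unfolding \<tau>_def using \<sigma> P1 by (intro real_le_rsqrt) auto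
  interpret Zp: prob_space Z unfolding Z_def using \<sigma> by (rule prob_G)
  interpret Zmp: prob_space Zm unfolding Zm_def using \<sigma> by (rule prob_G)
  interpret ZZ: pair_prob_space Z Zm by standard
  have Dp: "prob_space D" unfolding D_def by (rule ZZ.P.prob_space_axioms)
  interpret Dp: prob_space D by (rule Dp)
  interpret N3: pair_prob_space Z D by standard
  interpret Np: prob_space "noise \<sigma> n m" unfolding Nd by (rule N3.P.prob_space_axioms)
  obtain z0 where z0: "z0 \<in> space Z" using Zp.not_empty by auto
  from code obtain enc1 :: "nat \<Rightarrow> (nat \<Rightarrow> real) \<Rightarrow> nat \<Rightarrow> real" and f2 f3 :: "nat \<Rightarrow> nat \<Rightarrow> real"
    and dec2 :: "(nat \<Rightarrow> real) \<Rightarrow> (nat \<Rightarrow> real) \<Rightarrow> nat" and decBS :: "nat \<Rightarrow> (nat \<Rightarrow> real) \<Rightarrow> nat" where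
    n0: "0 < n" and M10: "0 < M1" and M20: "0 < M2" and
    meas1: "\<forall>s1<M1. \<forall>s2<M2. \<forall>i<n.
           (\<lambda>(z1, z2, z3). sigX1 n g2 enc1 f2 s1 s2 z2 i) \<in> borel_measurable (noise \<sigma> n m)" and
    errm: "\<forall>s1<M1. \<forall>s2<M2. err_event n m g1 g21m g2 g21s enc1 f2 f3 dec2 decBS s1 s2 \<inter> space (noise \<sigma> n m)
             \<in> sets (noise \<sigma> n m)" and
    pow1: "(\<Sum>s1<M1. \<Sum>s2<M2. \<Sum>i<n.
           (\<integral>\<^sup>+ (z1, z2, z3). ennreal ((sigX1 n g2 enc1 f2 s1 s2 z2 i)\<^sup>2) \<partial>noise \<sigma> n m))
          \<le> ennreal (real M1 * real M2 * real n * P1)" and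
    errs: "(\<Sum>s1<M1. \<Sum>s2<M2. measure (noise \<sigma> n m) (err_event n m g1 g21m g2 g21s enc1 f2 f3 dec2 decBS s1 s2
                                     \<inter> space (noise \<sigma> n m))) \<le> \<epsilon> * real M1 * real M2"
    unfolding is_code_def Let_def m_def by blast
  define err where "err s1 s2 = err_event n m g1 g21m g2 g21s enc1 f2 f3 dec2 decBS s1 s2 \<inter> space (noise \<sigma> n m)" for s1 s2
  define S where "S s1 s2 = space (noise \<sigma> n m) - err s1 s2" for s1 s2
  have Sm: "S s1 s2 \<in> sets (Z \<Otimes>\<^sub>M D)" if "s1 < M1" "s2 < M2" for s1 s2
    using errm that unfolding S_def err_def Nd by auto
  define X1 where "X1 s1 s2 d i = sigX1 n g2 enc1 f2 s1 s2 (fst d) i" for s1 s2 and d :: "(nat \<Rightarrow> real) \<times> (nat \<Rightarrow> real)" and i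
  have mX: "(\<lambda>d. X1 s1 s2 d i) \<in> borel_measurable D" if "s1 < M1" "s2 < M2" "i < n" for s1 s2 i
  proof -
    have "(\<lambda>(z1, z2, z3). sigX1 n g2 enc1 f2 s1 s2 z2 i) \<in> borel_measurable (Z \<Otimes>\<^sub>M D)"
      using meas1 that unfolding Nd by auto
    from measurable_Pair2[OF this z0] show ?thesis unfolding X1_def by (simp add: split_beta)
  qed
  define C0 where "C0 = exp \<gamma> + exp (- s * \<gamma>) * real M1 * exp (real n * F)"
  have C0: "0 \<le> C0" unfolding C0_def by simp
  define c where "c = g1\<^sup>2 / (real n * T)"
  have c: "0 \<le> c" unfolding c_def using Tp by simp
  define J where "J s2 = (\<Sum>s1<M1. \<Sum>i<n. \<integral>\<^sup>+d. ennreal ((X1 s1 s2 d i)\<^sup>2) \<partial>D)" for s2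
  have pers2: "(\<Sum>s1<M1. emeasure (Z \<Otimes>\<^sub>M D) (S s1 s2)) \<le> ennreal c * J s2 + ennreal C0" if s2: "s2 < M2" for s2
  proof -
    define K where "K d = ennreal c * (\<Sum>s1<M1. \<Sum>i<n. ennreal ((X1 s1 s2 d i)\<^sup>2)) + ennreal C0" for d
    have "(\<Sum>s1<M1. emeasure (Z \<Otimes>\<^sub>M D) (S s1 s2)) \<le> (\<integral>\<^sup>+d. K d \<partial>D)"
    proof (rule sections_sum_fst[OF Zp.prob_space_axioms Dp])
      show "finite {..<M1}" by simp
      show "\<And>i. i \<in> {..<M1} \<Longrightarrow> S i s2 \<in> sets (Z \<Otimes>\<^sub>M D)" using Sm s2 by auto
      show "K \<in> borel_measurable D" unfolding K_def using mX s2
        by (intro borel_measurable_add borel_measurable_times_ennreal borel_measurable_sum measurable_compose[OF _ measurable_ennreal] borel_measurable_power) auto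
      fix d assume d: "d \<in> space D"
      define E where "E a = (\<lambda>z. (z, d)) -` S a s2" for a
      define xx where "xx a i = g1 * X1 a s2 d i + g21m * sigX2 n f2 s2 i" for a i
      define cc where "cc i = g21m * sigX2 n f2 s2 i" for i
      have Em: "E a \<in> sets Z" if "a \<in> {..<M1}" for a
        unfolding E_def using Sm[OF _ s2] that by (auto intro!: sets_Pair2)
      have "(\<Sum>a\<in>{..<M1}. measure Z (E a))
         \<le> real (card {a\<in>{..<M1}. real n * T < (\<Sum>i<n. (xx a i - cc i)\<^sup>2)}) + exp \<gamma>
           + exp (- s * \<gamma>) * card {..<M1} * exp (real n * (gK0 \<sigma> \<tau> s + gK1 \<sigma> \<tau> s * T))"
        unfolding Z_def
      proof (rule awgn_count[OF \<sigma> \<sigma>\<tau> s(1)])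
        show "finite {..<M1}" by simp
        show "\<And>a. a \<in> {..<M1} \<Longrightarrow> E a \<in> sets (PiM {..<n} (\<lambda>_. gauss \<sigma>))" using Em unfolding Z_def by auto
        fix a a' z z' assume a: "a \<in> {..<M1}" "a' \<in> {..<M1}" and z: "z \<in> E a" "z' \<in> E a'"
          and eq: "\<And>i. i < n \<Longrightarrow> xx a i + z i = xx a' i + z' i"
        obtain z2 z3 where dd: "d = (z2, z3)" by (cases d)
        from z have "(z, z2, z3) \<notin> err a s2" "(z', z2, z3) \<notin> err a' s2"
          "(z, z2, z3) \<in> space (noise \<sigma> n m)" "(z', z2, z3) \<in> space (noise \<sigma> n m)"
          unfolding E_def S_def dd by auto
        then have "dec2 (sigY1 n g1 g21m g2 enc1 f2 a s2 z z2) (sigY3 m g21s f3 s2 z3) = a"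
             "dec2 (sigY1 n g1 g21m g2 enc1 f2 a' s2 z' z2) (sigY3 m g21s f3 s2 z3) = a'"
          unfolding err_def err_event_def by (auto simp: Let_def)
        moreover have "sigY1 n g1 g21m g2 enc1 f2 a s2 z z2 = sigY1 n g1 g21m g2 enc1 f2 a' s2 z' z2"
          by (rule sigY1_eq) (use eq in \<open>simp add: xx_def X1_def dd\<close>)
        ultimately show "a = a'" by simp
      qed
      also have "real (card {a\<in>{..<M1}. real n * T < (\<Sum>i<n. (xx a i - cc i)\<^sup>2)})
          \<le> (\<Sum>a<M1. (\<Sum>i<n. (xx a i - cc i)\<^sup>2)) / (real n * T)"
        using n0 Tp by (intro card_markov) (auto intro: sum_nonneg)
      also have "(\<Sum>a<M1. (\<Sum>i<n. (xx a i - cc i)\<^sup>2)) / (real n * T) = (\<Sum>a<M1. \<Sum>i<n. c * (X1 a s2 d i)\<^sup>2)"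
        unfolding xx_def cc_def c_def by (simp add: power_mult_distrib sum_divide_distrib sum_distrib_left)
      finally have le: "(\<Sum>a\<in>{..<M1}. measure Z (E a)) \<le> (\<Sum>a<M1. \<Sum>i<n. c * (X1 a s2 d i)\<^sup>2) + C0"
        unfolding C0_def F_def by simp
      have "(\<Sum>a\<in>{..<M1}. emeasure Z (E a)) = ennreal (\<Sum>a\<in>{..<M1}. measure Z (E a))"
        by (simp add: Zp.emeasure_eq_measure sum_ennreal)
      also have "\<dots> \<le> ennreal ((\<Sum>a<M1. \<Sum>i<n. c * (X1 a s2 d i)\<^sup>2) + C0)"
        using le by (rule ennreal_leI)
      also have "\<dots> = K d"
        unfolding K_def using c C0
        by (simp add: ennreal_plus sum_nonneg ennreal_mult sum_ennreal sum_distrib_left[symmetric])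
      finally show "(\<Sum>i\<in>{..<M1}. emeasure Z ((\<lambda>z. (z, d)) -` S i s2)) \<le> K d" unfolding E_def .
    qed
    also have "(\<integral>\<^sup>+d. K d \<partial>D) = ennreal c * J s2 + ennreal C0"
    proof -
      have m1: "(\<lambda>d. ennreal ((X1 s1 s2 d i)\<^sup>2)) \<in> borel_measurable D" if "s1 < M1" "i < n" for s1 i
        using mX[OF that(1) s2 that(2)] by measurable
      have "(\<integral>\<^sup>+d. K d \<partial>D) = (\<integral>\<^sup>+d. ennreal c * (\<Sum>s1<M1. \<Sum>i<n. ennreal ((X1 s1 s2 d i)\<^sup>2)) \<partial>D) + (\<integral>\<^sup>+d. ennreal C0 \<partial>D)"
        unfolding K_def using m1 by (intro nn_integral_add) (auto intro!: borel_measurable_sum)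
      also have "(\<integral>\<^sup>+d. ennreal C0 \<partial>D) = ennreal C0" by (simp add: Dp.emeasure_space_1)
      also have "(\<integral>\<^sup>+d. ennreal c * (\<Sum>s1<M1. \<Sum>i<n. ennreal ((X1 s1 s2 d i)\<^sup>2)) \<partial>D)
          = ennreal c * (\<integral>\<^sup>+d. (\<Sum>s1<M1. \<Sum>i<n. ennreal ((X1 s1 s2 d i)\<^sup>2)) \<partial>D)"
        using m1 by (intro nn_integral_cmult) (auto intro!: borel_measurable_sum)
      also have "(\<integral>\<^sup>+d. (\<Sum>s1<M1. \<Sum>i<n. ennreal ((X1 s1 s2 d i)\<^sup>2)) \<partial>D) = J s2"
      proof -
        have "(\<integral>\<^sup>+d. (\<Sum>s1<M1. \<Sum>i<n. ennreal ((X1 s1 s2 d i)\<^sup>2)) \<partial>D)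
            = (\<Sum>s1<M1. \<integral>\<^sup>+d. (\<Sum>i<n. ennreal ((X1 s1 s2 d i)\<^sup>2)) \<partial>D)"
          by (intro nn_integral_sum borel_measurable_sum m1; simp)
        also have "\<dots> = (\<Sum>s1<M1. \<Sum>i<n. \<integral>\<^sup>+d. ennreal ((X1 s1 s2 d i)\<^sup>2) \<partial>D)"
          by (intro sum.cong refl nn_integral_sum m1; simp)
        finally show ?thesis unfolding J_def .
      qed
      finally show ?thesis .
    qed
    finally show ?thesis .
  qed
  have Jsum: "(\<Sum>s2<M2. J s2) \<le> ennreal (real M1 * real M2 * real n * P1)"
  proof -
    have "(\<Sum>s2<M2. J s2) = (\<Sum>s1<M1. \<Sum>s2<M2. \<Sum>i<n. \<integral>\<^sup>+d. ennreal ((X1 s1 s2 d i)\<^sup>2) \<partial>D)"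
      unfolding J_def by (rule sum.swap)
    also have "\<dots> = (\<Sum>s1<M1. \<Sum>s2<M2. \<Sum>i<n.
           (\<integral>\<^sup>+ (z1, z2, z3). ennreal ((sigX1 n g2 enc1 f2 s1 s2 z2 i)\<^sup>2) \<partial>noise \<sigma> n m))"
    proof (intro sum.cong refl)
      fix s1 s2 i assume "s1 \<in> {..<M1}" "s2 \<in> {..<M2}" "i \<in> {..<n}"
      then have "(\<lambda>d. X1 s1 s2 d i) \<in> borel_measurable D" using mX by auto
      then have mm: "(\<lambda>d. ennreal ((X1 s1 s2 d i)\<^sup>2)) \<in> borel_measurable D"
        by measurable
      have eqf: "(\<lambda>(z1, z2, z3). ennreal ((sigX1 n g2 enc1 f2 s1 s2 z2 i)\<^sup>2)) = (\<lambda>\<omega>. ennreal ((X1 s1 s2 (snd \<omega>) i)\<^sup>2))"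
        unfolding X1_def by (auto simp: fun_eq_iff)
      show "(\<integral>\<^sup>+d. ennreal ((X1 s1 s2 d i)\<^sup>2) \<partial>D) =
           (\<integral>\<^sup>+ (z1, z2, z3). ennreal ((sigX1 n g2 enc1 f2 s1 s2 z2 i)\<^sup>2) \<partial>noise \<sigma> n m)"
        unfolding Nd eqf by (rule nn_integral_snd_only[OF Zp.prob_space_axioms Dp mm, symmetric])
    qed
    finally show ?thesis using pow1 by simp
  qed
  have tot: "(\<Sum>s2<M2. \<Sum>s1<M1. measure (noise \<sigma> n m) (S s1 s2)) \<le> c * (real M1 * real M2 * real n * P1) + real M2 * C0"
  proof -
    have "ennreal (\<Sum>s2<M2. \<Sum>s1<M1. measure (noise \<sigma> n m) (S s1 s2)) = (\<Sum>s2<M2. \<Sum>s1<M1. emeasure (Z \<Otimes>\<^sub>M D) (S s1 s2))"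
      unfolding Nd[symmetric] by (simp add: Np.emeasure_eq_measure sum_ennreal sum_nonneg)
    also have "\<dots> \<le> (\<Sum>s2<M2. ennreal c * J s2 + ennreal C0)"
      by (intro sum_mono pers2) auto
    also have "\<dots> = ennreal c * (\<Sum>s2<M2. J s2) + ennreal (real M2 * C0)"
      using C0 by (simp add: sum.distrib sum_distrib_left ennreal_mult ennreal_of_nat_eq_real_of_nat)
    also have "\<dots> \<le> ennreal c * ennreal (real M1 * real M2 * real n * P1) + ennreal (real M2 * C0)"
      using Jsum by (intro add_right_mono mult_left_mono) auto
    also have "\<dots> = ennreal (c * (real M1 * real M2 * real n * P1) + real M2 * C0)"
      using c C0 P1 by (simp add: ennreal_plus ennreal_mult)
    finally show ?thesis using c C0 P1 by (subst (asm) ennreal_le_iff) auto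
  qed
  have "(\<Sum>s2<M2. \<Sum>s1<M1. measure (noise \<sigma> n m) (S s1 s2)) = (\<Sum>s1<M1. \<Sum>s2<M2. measure (noise \<sigma> n m) (S s1 s2))"
    by (rule sum.swap)
  also have "\<dots> = (\<Sum>s1<M1. \<Sum>s2<M2. 1 - measure (noise \<sigma> n m) (err s1 s2))"
    unfolding S_def err_def using errm by (intro sum.cong refl Np.prob_compl) auto
  also have "\<dots> = real M1 * real M2 - (\<Sum>s1<M1. \<Sum>s2<M2. measure (noise \<sigma> n m) (err s1 s2))"
    by (simp add: sum_subtractf)
  finally have "(1 - \<epsilon>) * real M1 * real M2 \<le> (\<Sum>s2<M2. \<Sum>s1<M1. measure (noise \<sigma> n m) (S s1 s2))"
    using errs unfolding err_def by (simp add: algebra_simps)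
  also note tot
  also have "c * (real M1 * real M2 * real n * P1) = real M2 * (real M1 * (g1\<^sup>2 * P1) / T)"
    unfolding c_def using n0 Tp by (simp add: field_simps)
  finally have "real M2 * ((1 - \<epsilon>) * real M1) \<le> real M2 * (real M1 * (g1\<^sup>2 * P1) / T + C0)"
    by (simp add: algebra_simps)
  then have "(1 - \<epsilon>) * real M1 \<le> real M1 * (g1\<^sup>2 * P1) / T + C0" using M20 by simp
  then show ?thesis unfolding C0_def F_def \<tau>_def by (simp add: algebra_simps)
qed



lemma ach_R2:
  assumes Wm: "0 < Wm" and \<sigma>: "0 < \<sigma>" and P2: "0 \<le> P2"
    and ach: "achievable Wm Ws g1 g21m g2 g21s \<sigma> P1 P2 R1 R2"
  shows "R2 \<le> Cap Wm (g2\<^sup>2 * P2 / \<sigma>\<^sup>2)"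
proof -
  have "R2 \<le> Wm * log 2 (1 + g2\<^sup>2 * P2 / \<sigma>\<^sup>2)"
  proof (rule rate_bound[OF Wm \<sigma>])
    show "0 \<le> g2\<^sup>2 * P2" using P2 by simp
    fix \<epsilon> :: real assume e: "\<epsilon> > 0"
    from ach e obtain N where N: "\<forall>n\<ge>N. \<exists>M1 M2.
        2 powr (real n * R1 / (2 * Wm)) \<le> real M1 \<and>
        2 powr (real n * R2 / (2 * Wm)) \<le> real M2 \<and>
        is_code Wm Ws g1 g21m g2 g21s \<sigma> P1 P2 n M1 M2 \<epsilon>"
      unfolding achievable_def by blast
    show "\<exists>N. \<forall>n\<ge>N. \<exists>M::real. 2 powr (real n * R2 / (2 * Wm)) \<le> M \<and>
      (\<forall>T s \<gamma>. g2\<^sup>2 * P2 < T \<longrightarrow> 0 < s \<longrightarrow> s \<le> 1 \<longrightarrow>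
         (1 - \<epsilon>) * M \<le> M * (g2\<^sup>2 * P2) / T + exp \<gamma> + M * exp (- s * \<gamma>) *
            exp (real n * (gK0 \<sigma> (sqrt (\<sigma>\<^sup>2 + g2\<^sup>2 * P2)) s + gK1 \<sigma> (sqrt (\<sigma>\<^sup>2 + g2\<^sup>2 * P2)) s * T)))"
    proof (rule exI[of _ N], intro allI impI)
      fix n assume "N \<le> n"
      with N obtain M1 M2 where M: "2 powr (real n * R2 / (2 * Wm)) \<le> real M2"
        and c: "is_code Wm Ws g1 g21m g2 g21s \<sigma> P1 P2 n M1 M2 \<epsilon>" by blast
      show "\<exists>M::real. 2 powr (real n * R2 / (2 * Wm)) \<le> M \<and>
      (\<forall>T s \<gamma>. g2\<^sup>2 * P2 < T \<longrightarrow> 0 < s \<longrightarrow> s \<le> 1 \<longrightarrow>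
         (1 - \<epsilon>) * M \<le> M * (g2\<^sup>2 * P2) / T + exp \<gamma> + M * exp (- s * \<gamma>) *
            exp (real n * (gK0 \<sigma> (sqrt (\<sigma>\<^sup>2 + g2\<^sup>2 * P2)) s + gK1 \<sigma> (sqrt (\<sigma>\<^sup>2 + g2\<^sup>2 * P2)) s * T)))"
        using M code_R2[OF \<sigma> P2 c] by blast
    qed
  qed
  then show ?thesis unfolding Cap_def .
qed

lemma ach_R1:
  assumes Wm: "0 < Wm" and \<sigma>: "0 < \<sigma>" and P1: "0 \<le> P1"
    and ach: "achievable Wm Ws g1 g21m g2 g21s \<sigma> P1 P2 R1 R2"
  shows "R1 \<le> Cap Wm (g1\<^sup>2 * P1 / \<sigma>\<^sup>2)"
proof -
  have "R1 \<le> Wm * log 2 (1 + g1\<^sup>2 * P1 / \<sigma>\<^sup>2)"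
  proof (rule rate_bound[OF Wm \<sigma>])
    show "0 \<le> g1\<^sup>2 * P1" using P1 by simp
    fix \<epsilon> :: real assume e: "\<epsilon> > 0"
    from ach e obtain N where N: "\<forall>n\<ge>N. \<exists>M1 M2.
        2 powr (real n * R1 / (2 * Wm)) \<le> real M1 \<and>
        2 powr (real n * R2 / (2 * Wm)) \<le> real M2 \<and>
        is_code Wm Ws g1 g21m g2 g21s \<sigma> P1 P2 n M1 M2 \<epsilon>"
      unfolding achievable_def by blast
    show "\<exists>N. \<forall>n\<ge>N. \<exists>M::real. 2 powr (real n * R1 / (2 * Wm)) \<le> M \<and>
      (\<forall>T s \<gamma>. g1\<^sup>2 * P1 < T \<longrightarrow> 0 < s \<longrightarrow> s \<le> 1 \<longrightarrow>
         (1 - \<epsilon>) * M \<le> M * (g1\<^sup>2 * P1) / T + exp \<gamma> + M * exp (- s * \<gamma>) *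
            exp (real n * (gK0 \<sigma> (sqrt (\<sigma>\<^sup>2 + g1\<^sup>2 * P1)) s + gK1 \<sigma> (sqrt (\<sigma>\<^sup>2 + g1\<^sup>2 * P1)) s * T)))"
    proof (rule exI[of _ N], intro allI impI)
      fix n assume "N \<le> n"
      with N obtain M1 M2 where M: "2 powr (real n * R1 / (2 * Wm)) \<le> real M1"
        and c: "is_code Wm Ws g1 g21m g2 g21s \<sigma> P1 P2 n M1 M2 \<epsilon>" by blast
      show "\<exists>M::real. 2 powr (real n * R1 / (2 * Wm)) \<le> M \<and>
      (\<forall>T s \<gamma>. g1\<^sup>2 * P1 < T \<longrightarrow> 0 < s \<longrightarrow> s \<le> 1 \<longrightarrow>
         (1 - \<epsilon>) * M \<le> M * (g1\<^sup>2 * P1) / T + exp \<gamma> + M * exp (- s * \<gamma>) *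
            exp (real n * (gK0 \<sigma> (sqrt (\<sigma>\<^sup>2 + g1\<^sup>2 * P1)) s + gK1 \<sigma> (sqrt (\<sigma>\<^sup>2 + g1\<^sup>2 * P1)) s * T)))"
        using M code_R1[OF \<sigma> P1 c] by blast
    qed
  qed
  then show ?thesis unfolding Cap_def .
qed

lemma cap_region_bound:
  assumes Wm: "0 < Wm" and \<sigma>: "0 < \<sigma>" and P1: "0 \<le> P1" and P2: "0 \<le> P2"
    and R: "(R1, R2) \<in> capacity_region Wm Ws g1 g21m g2 g21s \<sigma> P1 P2"
  shows "R1 \<le> Cap Wm (g1\<^sup>2 * P1 / \<sigma>\<^sup>2) \<and> R2 \<le> Cap Wm (g2\<^sup>2 * P2 / \<sigma>\<^sup>2)"
proof -
  define B where "B = {p :: real \<times> real. fst p \<le> Cap Wm (g1\<^sup>2 * P1 / \<sigma>\<^sup>2) \<and> snd p \<le> Cap Wm (g2\<^sup>2 * P2 / \<sigma>\<^sup>2)}"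
  have cl: "closed B" unfolding B_def
    by (intro closed_Collect_conj closed_Collect_le continuous_intros)
  have "{(R1, R2). achievable Wm Ws g1 g21m g2 g21s \<sigma> P1 P2 R1 R2} \<subseteq> B"
    unfolding B_def using ach_R1[OF Wm \<sigma> P1] ach_R2[OF Wm \<sigma> P2] by auto
  then have "capacity_region Wm Ws g1 g21m g2 g21s \<sigma> P1 P2 \<subseteq> B"
    unfolding capacity_region_def using cl by (rule closure_minimal)
  with R show ?thesis unfolding B_def by auto
qed



lemma cap_mono: "0 < Wm \<Longrightarrow> 0 \<le> x \<Longrightarrow> x \<le> y \<Longrightarrow> Cap Wm x \<le> Cap Wm y"
  unfolding Cap_def by (intro mult_left_mono log_mono) auto

lemma cap_half:
  assumes "0 < Wm" "0 \<le> S"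
  shows "Cap Wm S \<le> Cap Wm (S/2) + Wm"
proof -
  have "log 2 (1 + S) \<le> log 2 (2 * (1 + S/2))" using assms by (intro log_mono) auto
  also have "\<dots> = 1 + log 2 (1 + S/2)" using assms by (subst log_mult) auto
  finally have "log 2 (1 + S) \<le> 1 + log 2 (1 + S/2)" .
  then have "Wm * log 2 (1 + S) \<le> Wm * (1 + log 2 (1 + S/2))" using assms by (intro mult_left_mono) auto
  then show ?thesis unfolding Cap_def by (simp add: algebra_simps)
qed

lemma ln_scale:
  fixes W Y :: real
  assumes W: "1 \<le> W" and Y: "0 \<le> Y"
  shows "ln (1 + Y) \<le> W * ln (1 + Y / W)"
proof -
  have "(1 - 1/W) * ln 1 + (1/W) * ln (1 + Y) \<le> ln ((1 - 1/W) * 1 + (1/W) * (1 + Y))"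
    using concave_onD[OF ln_concave, of "1/W" 1 "1+Y"] W Y by simp
  also have "(1 - 1/W) * 1 + (1/W) * (1 + Y) = 1 + Y / W" using W by (simp add: field_simps)
  finally have "ln (1 + Y) / W \<le> ln (1 + Y / W)" by simp
  then show ?thesis using W by (simp add: pos_divide_le_eq mult.commute)
qed

theorem theorem3:
  fixes Wm Ws g1 g21m g2 g21s \<sigma> P1 P2 :: real
  assumes "0 < Wm" "0 < Ws" "0 < \<sigma>" "0 < P1" "0 < P2"
  defines "SNR1 \<equiv> g1\<^sup>2 * P1 / \<sigma>\<^sup>2"
      and "SNR2 \<equiv> g2\<^sup>2 * P2 / \<sigma>\<^sup>2"
      and "INR \<equiv> g21m\<^sup>2 * P2 / \<sigma>\<^sup>2"
      and "SNRs \<equiv> g21s\<^sup>2 * P2 / \<sigma>\<^sup>2"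
      and "W \<equiv> Ws / Wm"
  shows
    "(1 \<le> W \<and> SNR2 \<le> SNRs \<longrightarrow>
        (\<forall>(R1, R2) \<in> capacity_region Wm Ws g1 g21m g2 g21s \<sigma> P1 P2.
           (R1 - (Wm + Ws) / 2, R2 - (Wm + Ws) / 2) \<in> R_DC Wm Ws SNR1 SNR2 SNRs))
   \<and> ((\<exists>k::nat. 1 \<le> k \<and> W = real k) \<and> (1 + 2 / (sqrt 2 - 1)) * (INR - 2) \<le> SNRs \<longrightarrow>
        (\<forall>(R1, R2) \<in> capacity_region Wm Ws g1 g21m g2 g21s \<sigma> P1 P2.
           (R1 - (Wm + Ws) / 2, R2 - (Wm + Ws) / 2) \<in> R_EC Wm SNR1 SNR2 INR SNRs))"
proof -
  have Wm: "0 < Wm" and \<sigma>: "0 < \<sigma>" using assms by auto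
  have nn: "0 \<le> SNR1" "0 \<le> SNR2" "0 \<le> INR" "0 \<le> SNRs"
    unfolding SNR1_def SNR2_def INR_def SNRs_def using assms by auto
  have bnd: "R1 \<le> Cap Wm SNR1 \<and> R2 \<le> Cap Wm SNR2"
    if "(R1, R2) \<in> capacity_region Wm Ws g1 g21m g2 g21s \<sigma> P1 P2" for R1 R2
    unfolding SNR1_def SNR2_def using cap_region_bound[OF Wm \<sigma> _ _ that] assms by auto
  have WmWs: "Wm \<le> (Wm + Ws) / 2" if "1 \<le> W" using that Wm unfolding W_def by (simp add: field_simps)
  have half1: "Cap Wm SNR1 \<le> Cap Wm (SNR1/2) + Wm" by (rule cap_half[OF Wm nn(1)])
  have half2: "Cap Wm SNR2 \<le> Cap Wm (SNR2/2) + Wm" by (rule cap_half[OF Wm nn(2)])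
  have p0: "0 \<le> (Wm + Ws) / 2" using assms by simp
  show ?thesis
  proof (intro conjI impI)
    assume a: "1 \<le> W \<and> SNR2 \<le> SNRs"
    show "\<forall>(R1, R2) \<in> capacity_region Wm Ws g1 g21m g2 g21s \<sigma> P1 P2.
           (R1 - (Wm + Ws) / 2, R2 - (Wm + Ws) / 2) \<in> R_DC Wm Ws SNR1 SNR2 SNRs"
    proof (clarify)
      fix R1 R2 assume R: "(R1, R2) \<in> capacity_region Wm Ws g1 g21m g2 g21s \<sigma> P1 P2"
      note b = bnd[OF R]
      have c1: "R1 - (Wm + Ws) / 2 \<le> Cap Wm SNR1" using b p0 by linarith
      have c2: "R2 - (Wm + Ws) / 2 \<le> Cap Wm ((1 - 1/2) * SNR2)"
      proof -
        have e: "(1 - 1/2) * SNR2 = SNR2 / 2" by simp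
        have "Wm \<le> (Wm + Ws) / 2" using WmWs a by simp
        then show ?thesis unfolding e using b half2 by linarith
      qed
      have c3: "Cap Wm ((1 - 1/2) * SNR2) \<le> Ws * log 2 (1 + (1/2) * SNRs / (Ws / Wm))"
      proof -
        have "Cap Wm ((1 - 1/2) * SNR2) \<le> Cap Wm (SNRs / 2)"
          using a nn by (intro cap_mono Wm) auto
        also have "\<dots> = Wm * (ln (1 + SNRs / 2) / ln 2)" unfolding Cap_def log_def ..
        also have "\<dots> \<le> Wm * (W * ln (1 + (SNRs/2) / W) / ln 2)"
          using ln_scale[of W "SNRs/2"] a nn Wm by (intro mult_left_mono divide_right_mono) auto
        also have "\<dots> = Ws * log 2 (1 + (1/2) * SNRs / (Ws / Wm))"
          unfolding W_def log_def using Wm by simp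
        finally show ?thesis .
      qed
      show "(R1 - (Wm + Ws) / 2, R2 - (Wm + Ws) / 2) \<in> R_DC Wm Ws SNR1 SNR2 SNRs"
        unfolding R_DC_def
        by (rule UN_I[of "1/2"]) (use c1 c2 c3 in auto)
    qed
  next
    assume a: "(\<exists>k::nat. 1 \<le> k \<and> W = real k) \<and> (1 + 2 / (sqrt 2 - 1)) * (INR - 2) \<le> SNRs"
    then have W1: "1 \<le> W" by auto
    define K where "K = sqrt 2 - 1"
    have s2: "sqrt 2 * sqrt 2 = (2::real)" by simp
    have s2g: "1 < sqrt (2::real)" by simp
    have K0: "0 \<le> K" unfolding K_def using s2g by simp
    have K1: "(1 + K)\<^sup>2 = 2" unfolding K_def by (simp add: power2_eq_square)
    have K2: "K\<^sup>2 = 3 - 2 * sqrt 2" unfolding K_def by (simp add: power2_eq_square algebra_simps)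
    have c: "1 + 2 / (sqrt 2 - 1) = 3 + 2 * sqrt 2"
    proof -
      have "(sqrt 2 - 1) * (sqrt 2 + 1) = (1::real)" by (simp add: algebra_simps)
      then have "2 / (sqrt 2 - 1) = 2 * (sqrt 2 + 1)" using s2g by (simp add: field_simps)
      then show ?thesis by simp
    qed
    have prod1: "(3 - 2 * sqrt 2) * (3 + 2 * sqrt 2) = (1::real)" by (simp add: algebra_simps)
    define A where "A = 1 + K\<^sup>2 * SNRs / (1 + K)\<^sup>2"
    have A_ge: "INR / 2 \<le> A"
    proof -
      have "(3 - 2 * sqrt 2) * ((3 + 2 * sqrt 2) * (INR - 2)) \<le> (3 - 2 * sqrt 2) * SNRs"
      proof (rule mult_left_mono)
        have "sqrt 2 \<le> (3/2::real)" by (rule power2_le_imp_le) (auto simp: power2_eq_square)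
        then show "0 \<le> 3 - 2 * sqrt (2::real)" by simp
        show "(3 + 2 * sqrt 2) * (INR - 2) \<le> SNRs" using a c by simp
      qed
      then have "INR - 2 \<le> (3 - 2 * sqrt 2) * SNRs" using prod1 by (simp add: mult.assoc[symmetric])
      then show ?thesis unfolding A_def K1 K2 by simp
    qed
    have Apos: "0 < A" unfolding A_def K1 using nn K0 by (simp add: add_pos_nonneg)
    have q: "SNR1 / 2 \<le> SNR1 * A / (A + INR / (1 + K)\<^sup>2)"
    proof -
      have "A + INR / 2 \<le> 2 * A" using A_ge by simp
      moreover have "0 < A + INR / 2" using Apos nn by simp
      ultimately have "1 / 2 \<le> A / (A + INR / 2)" by (simp add: field_simps)
      then have "SNR1 * (1/2) \<le> SNR1 * (A / (A + INR / 2))" using nn by (intro mult_left_mono) auto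
      then show ?thesis unfolding K1 by simp
    qed
    show "\<forall>(R1, R2) \<in> capacity_region Wm Ws g1 g21m g2 g21s \<sigma> P1 P2.
           (R1 - (Wm + Ws) / 2, R2 - (Wm + Ws) / 2) \<in> R_EC Wm SNR1 SNR2 INR SNRs"
    proof (clarify)
      fix R1 R2 assume R: "(R1, R2) \<in> capacity_region Wm Ws g1 g21m g2 g21s \<sigma> P1 P2"
      note b = bnd[OF R]
      have c1: "R1 - (Wm + Ws) / 2 \<le> Cap Wm (SNR1 * A / (A + INR / (1 + K)\<^sup>2))"
      proof -
        have "Cap Wm (SNR1/2) \<le> Cap Wm (SNR1 * A / (A + INR / (1 + K)\<^sup>2))"
          using q nn by (intro cap_mono Wm) auto
        then show ?thesis using b half1 WmWs[OF W1] by linarith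
      qed
      have c2: "R2 - (Wm + Ws) / 2 \<le> Cap Wm (SNR2 / (1 + K)\<^sup>2)"
        unfolding K1 using b half2 WmWs[OF W1] by linarith
      show "(R1 - (Wm + Ws) / 2, R2 - (Wm + Ws) / 2) \<in> R_EC Wm SNR1 SNR2 INR SNRs"
        unfolding R_EC_def
        by (rule UN_I[of K]) (use c1 c2 K0 in \<open>auto simp: A_def\<close>)
    qed
  qed
qed


end
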